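(* Let $q$ be a prime power, $M\geq 2$ an integer, and let $f=gg^*\in\mathbb{F}_q[x]$ be a type $2$ polynomial of degree $2n$, where $g$ is monic irreducible of degree $n$ with $g(0)\neq 0$ and $g\neq g^*$. Let $C_f\in\mathrm{Sp}(2n,q)$ be an element with characteristic polynomial $f$. Then the equation $\alpha^M=C_f$ has a solution $\alpha\in\mathrm{Sp}(2n,q)$ if and only if $g$ is an $M$-power polynomial.
   Context: For a monic polynomial $f$ of degree $r$ with $f(0)\neq0$, $f^*(x)=f(0)^{-1}x^rf(x^{-1})$. $\mathrm{Sp}(2n,q)$ is the group of $2n\times 2n$ matrices over $\mathbb{F}_q$ preserving a non-degenerate alternating bilinear form. A monic irreducible polynomial $g\in\mathbb{F}_q[x]$, $g\neq x$, of degree $k\geq1$ is an $M$-power polynomial if $g(x^M)$ has a monic irreducible factor of degree $k$. *)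

theory Defs
  imports "Jordan_Normal_Form.Char_Poly" "HOL-Computational_Algebra.Polynomial"
begin

definition recip_poly :: "'a::field poly \<Rightarrow> 'a poly" where
  "recip_poly f = Polynomial.smult (inverse (coeff f 0)) (reflect_poly f)"

(* Omega is the Gram matrix of a non-degenerate alternating bilinear form
   B(u,v) = u^T Omega v on F^d *)
definition nondeg_alternating :: "nat \<Rightarrow> 'a::field mat \<Rightarrow> bool" where
  "nondeg_alternating d Omega \<longleftrightarrow> Omega \<in> carrier_mat d d
     \<and> (\<forall>v \<in> carrier_vec d. v \<bullet> (Omega *\<^sub>v v) = 0)
     \<and> det Omega \<noteq> 0"

definition sp_group :: "nat \<Rightarrow> 'a::field mat \<Rightarrow> 'a mat set" where
  "sp_group d Omega = {A \<in> carrier_mat d d. transpose_mat A * Omega * A = Omega}"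

definition M_power_poly :: "nat \<Rightarrow> 'a::field poly \<Rightarrow> bool" where
  "M_power_poly M g \<longleftrightarrow> monic g \<and> irreducible g \<and> g \<noteq> [:0, 1:] \<and> degree g \<ge> 1
     \<and> (\<exists>h. monic h \<and> irreducible h \<and> degree h = degree g
            \<and> h dvd pcompose g (monom 1 M))"

end

theory Submission
  imports Defs "Berlekamp_Zassenhaus.Berlekamp_Type_Based"
begin

lemma irr_coprime:
  fixes g r :: "'a::field poly"
  assumes "irreducible g" "\<not> g dvd r" shows "coprime g r"
  unfolding comm_monoid_mult_class.coprime_def'
proof (intro allI impI)
  fix c assume c: "c dvd g" "c dvd r"
  have "g dvd c \<or> is_unit c" using assms(1) c(1) unfolding irreducible_altdef by blast
  then show "c dvd 1" using c(2) assms(2) dvd_trans by blast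
qed

lemma bezout_aux:
  fixes a b :: "'a::field poly"
  shows "\<exists>u v d. d = u * a + v * b \<and> d dvd a \<and> d dvd b"
proof (induction "if b = 0 then 0 else Suc (degree b)" arbitrary: a b rule: less_induct)
  case less
  show ?case
  proof (cases "b = 0")
    case True
    then show ?thesis by (intro exI[of _ 1] exI[of _ 0] exI[of _ a]) auto
  next
    case False
    define r where "r = a mod b"
    define q where "q = a div b"
    have a: "a = q * b + r" unfolding q_def r_def by simp
    have lt: "(if r = 0 then 0 else Suc (degree r)) < (if b = 0 then 0 else Suc (degree b))"
      using False degree_mod_less[of b a] unfolding r_def by auto
    from less[OF lt] obtain u v d where d: "d = u * b + v * r" "d dvd b" "d dvd r" by blast
    have "d = v * a + (u - v * q) * b" using d(1) a by (simp add: algebra_simps)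
    moreover have "d dvd a" using d a by auto
    ultimately show ?thesis using d by blast
  qed
qed

lemma bezout_poly:
  fixes a b :: "'a::field poly"
  assumes "coprime a b" shows "\<exists>u v. u * a + v * b = 1"
proof -
  obtain u v d where d: "d = u * a + v * b" "d dvd a" "d dvd b" using bezout_aux by blast
  have "is_unit d" using assms d(2,3) unfolding comm_monoid_mult_class.coprime_def' by blast
  then obtain e where e: "d * e = 1" by (metis dvdE)
  have "(e * u) * a + (e * v) * b = 1" using d(1) e by (simp add: algebra_simps)
  then show ?thesis by blast
qed

lemma coprime_dvd_mult_poly:
  fixes a b c :: "'a::field poly"
  assumes "coprime a b" "a dvd c" "b dvd c" shows "a * b dvd c"
proof -
  obtain u v where uv: "u * a + v * b = 1" using bezout_poly[OF assms(1)] by blast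
  have "c = (u * a + v * b) * c" using uv by simp
  also have "\<dots> = u * (a * c) + v * (b * c)" by (simp add: algebra_simps)
  finally have c: "c = u * (a * c) + v * (b * c)" .
  have 1: "a * b dvd a * c" using assms(3) by simp
  have 2: "a * b dvd b * c" using assms(2) by (simp add: mult.commute)
  have "a * b dvd u * (a * c) + v * (b * c)" using dvd_mult[OF 1, of u] dvd_mult[OF 2, of v] by (rule dvd_add)
  then show ?thesis using c by simp
qed

lemma monom_1_eq_x_pow: "monom (1::'a::comm_semiring_1) n = [:0,1:] ^ n"
  by (simp add: monom_altdef)

lemma cong_pcompose:
  fixes a b m :: "'a::field poly"
  assumes "[a = b] (mod m)"
  shows "[r \<circ>\<^sub>p a = r \<circ>\<^sub>p b] (mod m)"
proof (induction r rule: pCons_induct)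
  case 0 show ?case by simp
next
  case (pCons c r)
  have "[[:c:] + a * (r \<circ>\<^sub>p a) = [:c:] + b * (r \<circ>\<^sub>p b)] (mod m)"
    by (intro cong_add cong_mult assms pCons.IH cong_refl)
  then show ?case by (simp add: pcompose_pCons)
qed

lemma x_pcompose[simp]: "[:0,1:] \<circ>\<^sub>p p = (p::'a::comm_semiring_1 poly)"
  by (simp add: pcompose_pCons)

lemma pcompose_x_pow: "([:0,1:] ^ k) \<circ>\<^sub>p p = (p::'a::comm_ring_1 poly) ^ k"
  by (induction k) (auto simp: pcompose_mult)

lemma cong_dvd_poly: "[(a::'a::field poly) = b] (mod m) \<longleftrightarrow> m dvd a - b"
  by (rule cong_iff_dvd_diff)

lemma cong_0_poly: "[(a::'a::field poly) = 0] (mod m) \<longleftrightarrow> m dvd a"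
  by (simp add: cong_dvd_poly)

lemma irr_degree_pos: "irreducible (g::'a::field poly) \<Longrightarrow> degree g > 0"
  using is_unit_iff_degree[of g] by (auto simp: irreducible_def)

lemma card_ge2: "CARD('a::{field,finite}) \<ge> 2"
proof -
  have "card {0::'a, 1} = 2" by simp
  moreover have "card {0::'a, 1} \<le> CARD('a)" by (rule card_mono) auto
  ultimately show ?thesis by simp
qed

lemma Pset_card:
  assumes k: "k \<ge> 1"
  shows "card {s::'a::{field,finite} poly. degree s < k} = CARD('a)^k"
    "finite {s::'a::{field,finite} poly. degree s < k}"
proof -
  let ?A = "(carrier_vec k:: 'a vec set)"
  let ?B = "{s::'a poly. degree s < k}"
  have bij: "bij_betw (Poly \<circ> list_of_vec) ?A ?B"
  proof (unfold bij_betw_def, rule conjI)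
    show "inj_on (Poly \<circ> list_of_vec) ?A" by (rule inj_Poly_list_of_vec)
    show "(Poly \<circ> list_of_vec) ` ?A = ?B"
    proof (unfold image_def o_def, auto)
      fix xa assume "xa \<in> ?A" thus "degree (Poly (list_of_vec xa)) < k"
        using degree_Poly_list_of_vec k by fastforce
    next
      fix x::"'a poly"
      assume deg_x: "degree x < k"
      let ?xa = "vec_of_list (coeffs x @ replicate (k - length (coeffs x)) 0)"
      show "\<exists>xa\<in>carrier_vec k. x = Poly (list_of_vec xa)"
        by (rule bexI[of _ "?xa"], unfold carrier_vec_def, insert deg_x)
           (auto simp add: degree_eq_length_coeffs)
    qed
  qed
  have "CARD('a)^k = card ?A" by (simp add: card_carrier_vec)
  also have "... = card ?B" using bij bij_betw_same_card by blast
  finally show c: "card ?B = CARD('a)^k" ..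
  show "finite ?B" by (rule card_ge_0_finite) (simp add: c)
qed

lemma dvd_small_degree_zero:
  fixes g s :: "'a::field poly"
  assumes "g dvd s" "degree s < degree g" shows "s = 0"
proof (rule ccontr)
  assume "s \<noteq> 0"
  then have "degree g \<le> degree s" using dvd_imp_degree_le[OF assms(1)] by blast
  then show False using assms(2) by simp
qed

lemma pcompose_one[simp]: "1 \<circ>\<^sub>p q = (1::'a::comm_semiring_1 poly)"
  by (metis one_pCons pcompose_const)

lemma pcompose_power_left': "(p ^ k) \<circ>\<^sub>p q = (p \<circ>\<^sub>p q) ^ k" for p q :: "'a::comm_ring_1 poly"
  by (induction k) (auto simp: pcompose_mult)

lemma not_unit_dvd_one: "\<not> is_unit g \<Longrightarrow> \<not> g dvd 1"
  by simp

lemma irr_factor_comp: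
  fixes g p H :: "'a::field poly"
  assumes g: "irreducible g" and H: "H \<noteq> 0" and dv: "g dvd H \<circ>\<^sub>p p"
  shows "\<exists>h. irreducible h \<and> h dvd H \<and> g dvd h \<circ>\<^sub>p p"
  using H dv
proof (induction "degree H" arbitrary: H rule: less_induct)
  case less
  have pg: "prime_elem g" using g by (rule field_poly_irreducible_imp_prime)
  show ?case
  proof (cases "irreducible H")
    case True
    have "irreducible H \<and> H dvd H \<and> g dvd H \<circ>\<^sub>p p" using True less.prems(2) by simp
    then show ?thesis by (rule exI)
  next
    case False
    show ?thesis
    proof (cases "is_unit H")
      case True
      then have "degree H = 0" using is_unit_iff_degree[OF less.prems(1)] by simp
      then obtain c where Hc: "H = [:c:]" by (elim degree_eq_zeroE)
      then have "H \<circ>\<^sub>p p = H" by simp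
      then have "g dvd H" using less.prems(2) by simp
      from dvd_trans[OF this True] have "g dvd 1" .
      then show ?thesis using g by (simp add: irreducible_def)
    next
      case nu: False
      from False nu less.prems(1) obtain a b where ab: "H = a * b" "\<not> is_unit a" "\<not> is_unit b"
        unfolding irreducible_def by blast
      have a0: "a \<noteq> 0" "b \<noteq> 0" using ab less.prems(1) by auto
      have da: "degree a > 0" using ab(2) a0(1) by (simp add: is_unit_field_poly)
      have db: "degree b > 0" using ab(3) a0(2) by (simp add: is_unit_field_poly)
      have dH: "degree H = degree a + degree b" using ab(1) a0 by (simp add: degree_mult_eq)
      have "g dvd (a \<circ>\<^sub>p p) * (b \<circ>\<^sub>p p)" using less.prems(2) ab(1) by (simp add: pcompose_mult)
      then have "g dvd a \<circ>\<^sub>p p \<or> g dvd b \<circ>\<^sub>p p" by (simp only: prime_elem_dvd_mult_iff[OF pg])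
      then show ?thesis
      proof
        assume "g dvd a \<circ>\<^sub>p p"
        from less.hyps[of a, OF _ a0(1) this] dH db
        obtain h where "irreducible h" "h dvd a" "g dvd h \<circ>\<^sub>p p" by auto
        moreover have "h dvd H" unfolding ab(1) using \<open>h dvd a\<close> by (rule dvd_mult2)
        ultimately show ?thesis by blast
      next
        assume "g dvd b \<circ>\<^sub>p p"
        from less.hyps[of b, OF _ a0(2) this] dH da
        obtain h where "irreducible h" "h dvd b" "g dvd h \<circ>\<^sub>p p" by auto
        moreover have "h dvd H" unfolding ab(1) using \<open>h dvd b\<close> by (rule dvd_mult)
        ultimately show ?thesis by blast
      qed
    qed
  qed
qed

lemma mod_small: "degree r < degree g \<Longrightarrow> r mod g = (r::'a::field poly)"
  by (rule mod_poly_less)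

lemma degree_mod_lt:
  fixes a g :: "'a::field poly"
  assumes "degree g \<ge> 1" shows "degree (a mod g) < degree g"
proof (cases "a mod g = 0")
  case True then show ?thesis using assms by simp
next
  case False
  have "g \<noteq> 0" using assms by auto
  then show ?thesis using degree_mod_less'[OF _ False] by blast
qed

lemma Mpow_of_root:
  fixes g p :: "'a::{field,finite} poly"
  assumes mon: "monic g" and irr: "irreducible g" and c0: "coeff g 0 \<noteq> 0"
    and M1: "M \<ge> 1"
    and p: "[p ^ M = [:0,1:]] (mod g)"
  shows "M_power_poly M g"
proof -
  define n where "n = degree g"
  have n1: "n \<ge> 1" using irr_degree_pos[OF irr] n_def by simp
  have g0: "g \<noteq> 0" using irr by (auto simp: irreducible_def)
  have gnu: "\<not> g dvd 1" using irr by (auto simp: irreducible_def)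
  define X :: "'a poly" where "X = [:0,1:] ^ M"
  define G where "G = g \<circ>\<^sub>p X"
  have XM: "monom 1 M = X" unfolding X_def by (rule monom_1_eq_x_pow)
  have Xp: "X \<circ>\<^sub>p p = p ^ M" unfolding X_def by (rule pcompose_x_pow)
  have degX: "degree X = M" using XM[symmetric] by (simp add: degree_monom_eq)
  have G0: "G \<noteq> 0"
  proof -
    have "degree G = n * M" unfolding G_def n_def by (simp add: degree_pcompose degX)
    moreover have "n * M > 0" using n1 M1 by simp
    ultimately have "degree G > 0" by simp
    then show ?thesis by auto
  qed
  have Gp: "G \<circ>\<^sub>p p = g \<circ>\<^sub>p (p ^ M)" unfolding G_def by (simp add: pcompose_assoc[symmetric] Xp)
  have rp: "[r \<circ>\<^sub>p (p ^ M) = r] (mod g)" for r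
  proof -
    have "[r \<circ>\<^sub>p (p ^ M) = r \<circ>\<^sub>p [:0,1:]] (mod g)" by (rule cong_pcompose[OF p])
    moreover have "r \<circ>\<^sub>p [:0,1:] = r" by (rule pcompose_idR)
    ultimately show ?thesis by simp
  qed
  have gGp: "g dvd G \<circ>\<^sub>p p"
  proof -
    have "[G \<circ>\<^sub>p p = g] (mod g)" using rp[of g] Gp by simp
    then have "g dvd G \<circ>\<^sub>p p - g" by (simp add: cong_dvd_poly)
    from dvd_add[OF this dvd_refl[of g]] show ?thesis by simp
  qed
  obtain h0 where h0: "irreducible h0" "h0 dvd G" "g dvd h0 \<circ>\<^sub>p p"
    using irr_factor_comp[OF irr G0 gGp] by blast
  have h00: "h0 \<noteq> 0" using h0(1) by (auto simp: irreducible_def)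
  define c where "c = inverse (lead_coeff h0)"
  have c0': "c \<noteq> 0" unfolding c_def using h00 by simp
  define h where "h = Polynomial.smult c h0"
  have hmon: "monic h" unfolding h_def c_def using h00 by simp
  have hc: "h = [:c:] * h0" unfolding h_def by simp
  have cu: "is_unit [:c:]" using c0' by (simp add: is_unit_iff_degree)
  have hirr: "irreducible h" unfolding hc using h0(1) cu by (simp add: irreducible_mult_unit_left)
  have hG: "h dvd G"
  proof -
    obtain k where k: "G = h0 * k" using h0(2) by (elim dvdE)
    have "G = h * Polynomial.smult (lead_coeff h0) k" unfolding k h_def c_def using h00 by simp
    then show ?thesis by (rule dvdI)
  qed
  have hdeg: "degree h = degree h0" unfolding h_def using c0' by simp
  have hp: "g dvd h \<circ>\<^sub>p p" unfolding h_def using h0(3) by (simp add: pcompose_smult dvd_smult)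
  have h_0: "h \<noteq> 0" using hirr by (auto simp: irreducible_def)
  define e where "e = degree h"
  have e1: "e \<ge> 1" using irr_degree_pos[OF hirr] e_def by simp
  define \<phi> where "\<phi> s = (s \<circ>\<^sub>p p) mod g" for s
  have q1: "1 < CARD('a)" using card_ge2[where 'a='a] by simp
  have ne: "n \<le> e"
  proof (rule ccontr)
    assume "\<not> n \<le> e"
    have sub: "{s. degree s < n} \<subseteq> \<phi> ` {s. degree s < e}"
    proof
      fix r :: "'a poly" assume "r \<in> {s. degree s < n}"
      then have rn: "degree r < n" by simp
      define t where "t = r \<circ>\<^sub>p X"
      define s where "s = t mod h"
      have sdeg: "degree s < e" unfolding s_def e_def using degree_mod_lt[of h t] e1 e_def by simp
      have t_eq: "t = (t div h) * h + s" unfolding s_def by simp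
      have tp: "t \<circ>\<^sub>p p = ((t div h) \<circ>\<^sub>p p) * (h \<circ>\<^sub>p p) + s \<circ>\<^sub>p p"
        by (subst t_eq) (simp add: pcompose_add pcompose_mult)
      have z: "[((t div h) \<circ>\<^sub>p p) * (h \<circ>\<^sub>p p) = 0] (mod g)"
        using hp by (simp add: cong_0_poly)
      have "[((t div h) \<circ>\<^sub>p p) * (h \<circ>\<^sub>p p) + s \<circ>\<^sub>p p = 0 + s \<circ>\<^sub>p p] (mod g)"
        by (rule cong_add[OF z cong_refl])
      then have c1: "[t \<circ>\<^sub>p p = s \<circ>\<^sub>p p] (mod g)" unfolding tp by simp
      have "t \<circ>\<^sub>p p = r \<circ>\<^sub>p (p ^ M)" unfolding t_def by (simp add: pcompose_assoc[symmetric] Xp)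
      then have "[t \<circ>\<^sub>p p = r] (mod g)" using rp[of r] by simp
      then have "[s \<circ>\<^sub>p p = r] (mod g)" using cong_trans[OF cong_sym[OF c1]] by blast
      then have "\<phi> s = r mod g" unfolding \<phi>_def cong_def .
      also have "\<dots> = r" using rn n_def by (simp add: mod_small)
      finally have "\<phi> s = r" .
      then show "r \<in> \<phi> ` {s. degree s < e}" using sdeg by (intro image_eqI[where x=s]) auto
    qed
    have "CARD('a)^n = card {s::'a poly. degree s < n}" using Pset_card(1)[where 'a='a, OF n1] by simp
    also have "\<dots> \<le> card (\<phi> ` {s. degree s < e})"
      by (rule card_mono[OF finite_imageI[OF Pset_card(2)[where 'a='a, OF e1]] sub])
    also have "\<dots> \<le> card {s::'a poly. degree s < e}" by (rule card_image_le[OF Pset_card(2)[where 'a='a, OF e1]])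
    also have "\<dots> = CARD('a)^e" using Pset_card(1)[where 'a='a, OF e1] by simp
    finally have "n \<le> e" by (rule power_le_imp_le_exp[OF q1])
    with \<open>\<not> n \<le> e\<close> show False by simp
  qed
  have en: "e \<le> n"
  proof (rule ccontr)
    assume en: "\<not> e \<le> n"
    have n11: "n + 1 \<ge> 1" by simp
    have img: "\<phi> ` {s. degree s < n + 1} \<subseteq> {s. degree s < n}"
      unfolding \<phi>_def n_def using degree_mod_lt n1 n_def by auto
    have ninj: "\<not> inj_on \<phi> {s. degree s < n + 1}"
    proof
      assume inj: "inj_on \<phi> {s. degree s < n + 1}"
      have "CARD('a)^(n+1) = card {s::'a poly. degree s < n + 1}" using Pset_card(1)[where 'a='a, OF n11] by simp
      also have "\<dots> = card (\<phi> ` {s. degree s < n + 1})" by (rule card_image[OF inj, symmetric])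
      also have "\<dots> \<le> card {s::'a poly. degree s < n}" by (rule card_mono[OF Pset_card(2)[where 'a='a, OF n1] img])
      also have "\<dots> = CARD('a)^n" using Pset_card(1)[where 'a='a, OF n1] by simp
      finally have "n + 1 \<le> n" by (rule power_le_imp_le_exp[OF q1])
      then show False by simp
    qed
    then obtain s1 s2 where s12: "degree s1 < n + 1" "degree s2 < n + 1" "s1 \<noteq> s2" "\<phi> s1 = \<phi> s2"
      unfolding inj_on_def by blast
    define s where "s = s1 - s2"
    have s0: "s \<noteq> 0" using s12(3) s_def by simp
    have sdeg: "degree s \<le> n" unfolding s_def using degree_diff_le_max[of s1 s2] s12 by simp
    have "[s1 \<circ>\<^sub>p p = s2 \<circ>\<^sub>p p] (mod g)" using s12(4) unfolding \<phi>_def cong_def .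
    then have gs: "g dvd s \<circ>\<^sub>p p" unfolding s_def by (simp add: cong_dvd_poly pcompose_diff)
    have "\<not> h dvd s"
    proof
      assume "h dvd s"
      then have "degree h \<le> degree s" using s0 by (rule dvd_imp_degree_le)
      then show False using sdeg en e_def by simp
    qed
    then have "coprime h s" by (rule irr_coprime[OF hirr])
    then obtain u v where uv: "u * h + v * s = 1" using bezout_poly by blast
    have "(u \<circ>\<^sub>p p) * (h \<circ>\<^sub>p p) + (v \<circ>\<^sub>p p) * (s \<circ>\<^sub>p p) = 1"
      using arg_cong[OF uv, of "\<lambda>z. z \<circ>\<^sub>p p"] by (simp add: pcompose_add pcompose_mult)
    moreover have "g dvd (u \<circ>\<^sub>p p) * (h \<circ>\<^sub>p p) + (v \<circ>\<^sub>p p) * (s \<circ>\<^sub>p p)"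
      using hp gs by simp
    ultimately show False using gnu by simp
  qed
  have "degree h = degree g" using ne en e_def n_def by simp
  moreover have "g \<noteq> [:0,1:]" using c0 by auto
  ultimately have hh: "monic h \<and> irreducible h \<and> degree h = degree g \<and> h dvd g \<circ>\<^sub>p monom 1 M"
    using hmon hirr hG unfolding G_def XM by simp
  have "g \<noteq> [:0,1:]" using c0 by auto
  then show ?thesis unfolding M_power_poly_def using mon irr n1 n_def hh by blast
qed

lemma root_of_Mpow:
  fixes g :: "'a::{field,finite} poly"
  assumes "M_power_poly M g"
  shows "\<exists>p. [p ^ M = [:0,1:]] (mod g)"
proof -
  from assms obtain h where g: "monic g" "irreducible g" "degree g \<ge> 1"
    and h: "monic h" "irreducible h" "degree h = degree g" "h dvd g \<circ>\<^sub>p monom 1 M"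
    unfolding M_power_poly_def by blast
  define n where "n = degree g"
  have n1: "n \<ge> 1" using g n_def by simp
  define X :: "'a poly" where "X = [:0,1:] ^ M"
  have XM: "monom 1 M = X" unfolding X_def by (rule monom_1_eq_x_pow)
  have hnu: "\<not> h dvd 1" using h(2) by (auto simp: irreducible_def)
  have Z: "g dvd r" if hr: "h dvd r \<circ>\<^sub>p X" for r
  proof (rule ccontr)
    assume "\<not> g dvd r"
    then have "coprime g r" by (rule irr_coprime[OF g(2)])
    then obtain u v where uv: "u * g + v * r = 1" using bezout_poly by blast
    have "(u \<circ>\<^sub>p X) * (g \<circ>\<^sub>p X) + (v \<circ>\<^sub>p X) * (r \<circ>\<^sub>p X) = 1"
      using arg_cong[OF uv, of "\<lambda>z. z \<circ>\<^sub>p X"] by (simp add: pcompose_add pcompose_mult)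
    moreover have "h dvd (u \<circ>\<^sub>p X) * (g \<circ>\<^sub>p X) + (v \<circ>\<^sub>p X) * (r \<circ>\<^sub>p X)"
      using h(4) hr XM by simp
    ultimately show False using hnu by simp
  qed
  define \<phi> where "\<phi> s = (s \<circ>\<^sub>p X) mod h" for s
  have hdeg: "degree h = n" using h(3) n_def by simp
  have img: "\<phi> ` {s. degree s < n} \<subseteq> {s. degree s < n}"
    unfolding \<phi>_def using degree_mod_lt[of h] n1 hdeg by auto
  have inj: "inj_on \<phi> {s. degree s < n}"
  proof (rule inj_onI)
    fix s1 s2 assume s: "s1 \<in> {s. degree s < n}" "s2 \<in> {s. degree s < n}" "\<phi> s1 = \<phi> s2"
    have "[s1 \<circ>\<^sub>p X = s2 \<circ>\<^sub>p X] (mod h)" using s(3) unfolding \<phi>_def cong_def .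
    then have "h dvd (s1 - s2) \<circ>\<^sub>p X" by (simp add: cong_dvd_poly pcompose_diff)
    then have "g dvd s1 - s2" by (rule Z)
    moreover have "degree (s1 - s2) < degree g" using s(1,2) degree_diff_le_max[of s1 s2] n_def by auto
    ultimately have "s1 - s2 = 0" by (rule dvd_small_degree_zero)
    then show "s1 = s2" by simp
  qed
  have eq: "\<phi> ` {s. degree s < n} = {s. degree s < n}"
    by (rule card_seteq[OF Pset_card(2)[where 'a='a, OF n1] img]) (simp add: card_image[OF inj])
  have "[:0,1:] mod h \<in> {s. degree s < n}" using degree_mod_lt[of h] n1 hdeg by auto
  then have "[:0,1:] mod h \<in> \<phi> ` {s. degree s < n}" by (simp only: eq)
  then obtain s where s0: "s \<in> {s. degree s < n}" "[:0,1:] mod h = \<phi> s" by (rule imageE)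
  then have s: "degree s < n" "\<phi> s = [:0,1:] mod h" by auto
  have "[s \<circ>\<^sub>p X = [:0,1:]] (mod h)" using s(2) unfolding \<phi>_def cong_def .
  then have "[(s \<circ>\<^sub>p X) ^ M = [:0,1:] ^ M] (mod h)" by (rule cong_pow)
  then have "h dvd (s ^ M - [:0,1:]) \<circ>\<^sub>p X"
    by (simp add: cong_dvd_poly pcompose_diff pcompose_power_left' X_def)
  then have "g dvd s ^ M - [:0,1:]" by (rule Z)
  then show ?thesis by (auto simp: cong_dvd_poly)
qed

lemma x_irr: "irreducible ([:0,1:] :: 'a::field poly)"
  by (rule irreducible_linear_field_poly) simp

lemma x_dvd_coeff0: "[:0,1:] dvd (q::'a::field poly) \<Longrightarrow> coeff q 0 = 0"
  by (elim dvdE) (simp add: coeff_mult_0)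

lemma not_dvd_x:
  fixes g :: "'a::field poly"
  assumes "coeff g 0 \<noteq> 0" "irreducible g" shows "\<not> g dvd [:0,1:]"
proof
  assume "g dvd [:0,1:]"
  then have "is_unit g \<or> [:0,1:] dvd g" using x_irr[where 'a='a]
    unfolding irreducible_altdef by blast
  then show False using assms x_dvd_coeff0 by (auto simp: irreducible_def)
qed

definition mod_eq :: "'a::field poly \<Rightarrow> 'a poly \<Rightarrow> 'a poly \<Rightarrow> bool" where
  "mod_eq m a b \<longleftrightarrow> m dvd a - b"

lemma recip_facts:
  fixes g :: "'a::field poly"
  assumes mon: "monic g" and irr: "irreducible g" and c0: "coeff g 0 \<noteq> 0"
  shows "monic (recip_poly g)" "degree (recip_poly g) = degree g"
    "coeff (recip_poly g) 0 \<noteq> 0" "recip_poly (recip_poly g) = g"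
    "reflect_poly g = Polynomial.smult (coeff g 0) (recip_poly g)"
    "reflect_poly (recip_poly g) = Polynomial.smult (inverse (coeff g 0)) g"
    "irreducible (recip_poly g)"
proof -
  let ?c = "coeff g 0"
  let ?r = "recip_poly g"
  have r: "?r = Polynomial.smult (inverse ?c) (reflect_poly g)" by (simp add: recip_poly_def)
  show d: "degree ?r = degree g" using r c0 by simp
  show "monic ?r" using r c0 d by (simp add: coeff_reflect_poly)
  have rc0: "coeff ?r 0 = inverse ?c" using r mon by simp
  show "coeff ?r 0 \<noteq> 0" using rc0 c0 by simp
  have rr: "reflect_poly ?r = Polynomial.smult (inverse ?c) g" using r c0
    by (simp add: reflect_poly_smult)
  show "reflect_poly ?r = Polynomial.smult (inverse ?c) g" by (rule rr)
  show "recip_poly ?r = g" unfolding recip_poly_def[of ?r] rc0 rr using c0 by simp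
  show "reflect_poly g = Polynomial.smult ?c ?r" using r c0 by simp
  show "irreducible ?r"
  proof (rule irreducibleI)
    have dg: "degree g > 0" using irr_degree_pos[OF irr] .
    show "?r \<noteq> 0" using d dg by auto
    show "\<not> is_unit ?r" using d dg by (simp add: is_unit_iff_degree)
    fix a b assume ab: "?r = a * b"
    have a0: "coeff a 0 \<noteq> 0" and b0: "coeff b 0 \<noteq> 0"
      using arg_cong[OF ab, of "\<lambda>p. coeff p 0"] rc0 c0 by (auto simp: coeff_mult_0)
    have "g = Polynomial.smult ?c (reflect_poly ?r)" using rr c0 by simp
    also have "\<dots> = Polynomial.smult ?c (reflect_poly a) * reflect_poly b" using ab by (simp add: reflect_poly_mult)
    finally have geq: "g = Polynomial.smult ?c (reflect_poly a) * reflect_poly b" .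
    have "is_unit (Polynomial.smult ?c (reflect_poly a)) \<or> is_unit (reflect_poly b)"
      by (rule irreducibleD[OF irr geq])
    then have "degree (reflect_poly a) = 0 \<or> degree (reflect_poly b) = 0"
      using c0 by (auto simp: is_unit_field_poly)
    then have "degree a = 0 \<or> degree b = 0" using a0 b0 by simp
    moreover have "a \<noteq> 0" "b \<noteq> 0" using a0 b0 by auto
    ultimately show "is_unit a \<or> is_unit b" by (auto simp: is_unit_field_poly)
  qed
qed

lemma refl_cong:
  fixes G F \<iota> :: "'a::field poly"
  assumes xi: "[[:0,1:] * \<iota> = 1] (mod F)"
  shows "[[:0,1:] ^ degree G * (G \<circ>\<^sub>p \<iota>) = reflect_poly G] (mod F)"
proof (induction G rule: pCons_induct)
  case 0 then show ?case by simp
next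
  case (pCons a G)
  show ?case
  proof (cases "G = 0")
    case True then show ?thesis by simp
  next
    case False
    have dG: "degree (pCons a G) = Suc (degree G)" using False by simp
    have "[:0,1:] ^ degree (pCons a G) * (pCons a G \<circ>\<^sub>p \<iota>)
       = Polynomial.smult a ([:0,1:] ^ Suc (degree G)) + [:0,1:] ^ degree G * (G \<circ>\<^sub>p \<iota>) * ([:0,1:] * \<iota>)"
      unfolding dG by (simp add: pcompose_pCons algebra_simps)
    also have "[\<dots> = Polynomial.smult a ([:0,1:] ^ Suc (degree G)) + reflect_poly G * 1] (mod F)"
      by (intro cong_add cong_mult cong_refl pCons.IH xi)
    also have "Polynomial.smult a ([:0,1:] ^ Suc (degree G)) + reflect_poly G * 1 = reflect_poly (pCons a G)"
      using False by (simp add: reflect_poly_pCons' monom_altdef)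
    finally show ?thesis .
  qed
qed

lemma tau_dvd:
  fixes G F R \<iota> :: "'a::field poly"
  assumes xi: "[[:0,1:] * \<iota> = 1] (mod F)" and RF: "R dvd F" and RG: "R dvd reflect_poly G"
  shows "R dvd G \<circ>\<^sub>p \<iota>"
proof -
  have xiR: "[[:0,1:] * \<iota> = 1] (mod R)" using xi RF by (rule cong_dvd_modulus)
  have "[[:0,1:] ^ degree G * (G \<circ>\<^sub>p \<iota>) = reflect_poly G] (mod R)"
    using refl_cong[OF xi] RF by (rule cong_dvd_modulus)
  also have "[reflect_poly G = 0] (mod R)" using RG by (simp add: cong_0_poly)
  finally have c1: "[\<iota> ^ degree G * ([:0,1:] ^ degree G * (G \<circ>\<^sub>p \<iota>)) = \<iota> ^ degree G * 0] (mod R)"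
    by (intro cong_mult cong_refl)
  have "[([:0,1:] * \<iota>) ^ degree G = 1 ^ degree G] (mod R)" by (intro cong_pow xiR)
  then have "[([:0,1:] * \<iota>) ^ degree G * (G \<circ>\<^sub>p \<iota>) = 1 * (G \<circ>\<^sub>p \<iota>)] (mod R)"
    by (intro cong_mult cong_refl) simp
  moreover have "([:0,1:] * \<iota>) ^ degree G * (G \<circ>\<^sub>p \<iota>) = \<iota> ^ degree G * ([:0,1:] ^ degree G * (G \<circ>\<^sub>p \<iota>))"
    by (simp only: power_mult_distrib ac_simps)
  ultimately have "[1 * (G \<circ>\<^sub>p \<iota>) = \<iota> ^ degree G * 0] (mod R)"
    using c1 cong_trans cong_sym by metis
  then have "[G \<circ>\<^sub>p \<iota> = 0] (mod R)" by simp
  then show ?thesis by (simp add: cong_0_poly)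
qed

lemma cong_both:
  fixes a b g h :: "'a::field poly"
  assumes "coprime g h" "[a = b] (mod g)" "[a = b] (mod h)"
  shows "[a = b] (mod g * h)"
  using assms coprime_dvd_mult_poly by (simp add: cong_dvd_poly)

lemma construct_poly:
  fixes g p :: "'a::field poly"
  assumes mon: "monic g" and irr: "irreducible g" and c0: "coeff g 0 \<noteq> 0"
    and ne: "g \<noteq> recip_poly g" and M1: "M \<ge> 1"
    and p: "[p ^ M = [:0,1:]] (mod g)"
  shows "\<exists>\<iota> P. [[:0,1:] * \<iota> = 1] (mod g * recip_poly g) \<and>
     [P ^ M = [:0,1:]] (mod g * recip_poly g) \<and> [(P \<circ>\<^sub>p \<iota>) * P = 1] (mod g * recip_poly g)"
proof -
  define g' where "g' = recip_poly g"
  define f where "f = g * g'"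
  note rf = recip_facts[OF mon irr c0, folded g'_def]
  have gnu: "\<not> g dvd 1" using irr by (auto simp: irreducible_def)
  have g'nu: "\<not> g' dvd 1" using rf(7) by (auto simp: irreducible_def)
  have ndvd: "\<not> g dvd g'"
  proof
    assume "g dvd g'"
    then have "is_unit g \<or> g' dvd g" using rf(7) unfolding irreducible_altdef by blast
    then have "g' dvd g" using irr by (auto simp: irreducible_def)
    then obtain k where k: "g = g' * k" by (elim dvdE)
    have "g \<noteq> 0" "g' \<noteq> 0" using irr rf(7) by (auto simp: irreducible_def)
    then have "k \<noteq> 0" "degree k = 0" using k rf(2) by (auto simp: degree_mult_eq)
    then obtain c where "k = [:c:]" by (elim degree_eq_zeroE)
    then have "lead_coeff g = lead_coeff g' * c" using k by simp
    then have "c = 1" using mon rf(1) by simp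
    then have "g = g'" using k \<open>k = [:c:]\<close> by simp
    then show False using ne g'_def by simp
  qed
  have cgg: "coprime g g'" by (rule irr_coprime[OF irr ndvd])
  have xf: "coprime [:0,1:] f"
  proof (rule irr_coprime[OF x_irr])
    show "\<not> [:0,1:] dvd f"
    proof
      assume "[:0,1:] dvd f"
      then have "[:0,1:] dvd g \<or> [:0,1:] dvd g'" unfolding f_def
        by (simp only: prime_elem_dvd_mult_iff[OF field_poly_irreducible_imp_prime[OF x_irr]])
      then show False using x_dvd_coeff0[of g] x_dvd_coeff0[of g'] c0 rf(3) by auto
    qed
  qed
  obtain \<iota> v0 where iv: "\<iota> * [:0,1:] + v0 * f = 1" using bezout_poly[OF xf] by blast
  have xi: "[[:0,1:] * \<iota> = 1] (mod f)"
  proof -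
    have "[:0,1:] * \<iota> - 1 = - (v0 * f)" using iv by (simp add: algebra_simps)
    then show ?thesis by (simp add: cong_dvd_poly)
  qed
  have gf: "g dvd f" and g'f: "g' dvd f" unfolding f_def by auto
  have T1: "g' dvd r \<circ>\<^sub>p \<iota>" if gr: "g dvd r" for r
  proof -
    obtain u where "r = g * u" using gr by (elim dvdE)
    moreover have "g' dvd g \<circ>\<^sub>p \<iota>" by (rule tau_dvd[OF xi g'f]) (simp add: rf(5) dvd_smult)
    ultimately show ?thesis by (simp add: pcompose_mult)
  qed
  have T2: "g dvd r \<circ>\<^sub>p \<iota>" if gr: "g' dvd r" for r
  proof -
    obtain u where "r = g' * u" using gr by (elim dvdE)
    moreover have "g dvd g' \<circ>\<^sub>p \<iota>" by (rule tau_dvd[OF xi gf]) (simp add: rf(6) dvd_smult)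
    ultimately show ?thesis by (simp add: pcompose_mult)
  qed
  have T1c: "[a \<circ>\<^sub>p \<iota> = b \<circ>\<^sub>p \<iota>] (mod g')" if "[a = b] (mod g)" for a b
    using T1[of "a - b"] that by (simp add: cong_dvd_poly pcompose_diff)
  have T2c: "[a \<circ>\<^sub>p \<iota> = b \<circ>\<^sub>p \<iota>] (mod g)" if "[a = b] (mod g')" for a b
    using T2[of "a - b"] that by (simp add: cong_dvd_poly pcompose_diff)
  have ff: "f dvd f \<circ>\<^sub>p \<iota>"
  proof -
    have "f \<circ>\<^sub>p \<iota> = (g' \<circ>\<^sub>p \<iota>) * (g \<circ>\<^sub>p \<iota>)" unfolding f_def by (simp add: pcompose_mult)
    moreover have "g dvd g' \<circ>\<^sub>p \<iota>" using T2[of g'] by simp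
    moreover have "g' dvd g \<circ>\<^sub>p \<iota>" using T1[of g] by simp
    ultimately show ?thesis unfolding f_def by (simp add: mult_dvd_mono)
  qed
  have ii: "[\<iota> \<circ>\<^sub>p \<iota> = [:0,1:]] (mod f)"
  proof -
    obtain w where w: "[:0,1:] * \<iota> - 1 = f * w" using xi by (auto simp: cong_dvd_poly elim!: dvdE)
    have "\<iota> * (\<iota> \<circ>\<^sub>p \<iota>) - 1 = (f \<circ>\<^sub>p \<iota>) * (w \<circ>\<^sub>p \<iota>)"
      using arg_cong[OF w, of "\<lambda>z. z \<circ>\<^sub>p \<iota>"] by (simp add: pcompose_diff pcompose_mult)
    then have a: "f dvd \<iota> * (\<iota> \<circ>\<^sub>p \<iota>) - 1" using ff by simp
    have eq: "\<iota> \<circ>\<^sub>p \<iota> - [:0,1:] = [:0,1:] * (\<iota> * (\<iota> \<circ>\<^sub>p \<iota>) - 1) - ([:0,1:] * \<iota> - 1) * (\<iota> \<circ>\<^sub>p \<iota>)"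
      by (simp add: algebra_simps)
    have b: "f dvd [:0,1:] * \<iota> - 1" using xi by (simp add: cong_dvd_poly)
    have "f dvd [:0,1:] * (\<iota> * (\<iota> \<circ>\<^sub>p \<iota>) - 1) - ([:0,1:] * \<iota> - 1) * (\<iota> \<circ>\<^sub>p \<iota>)"
      by (rule dvd_diff[OF dvd_mult[OF a] dvd_mult2[OF b]])
    then have "f dvd \<iota> \<circ>\<^sub>p \<iota> - [:0,1:]" by (simp only: eq)
    then show ?thesis by (simp add: cong_dvd_poly)
  qed
  have T3: "[(r \<circ>\<^sub>p \<iota>) \<circ>\<^sub>p \<iota> = r] (mod f)" for r
  proof -
    have A: "[r \<circ>\<^sub>p (\<iota> \<circ>\<^sub>p \<iota>) = r \<circ>\<^sub>p [:0,1:]] (mod f)" by (rule cong_pcompose[OF ii])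
    have B: "r \<circ>\<^sub>p [:0,1:] = r" by (rule pcompose_idR)
    have C: "(r \<circ>\<^sub>p \<iota>) \<circ>\<^sub>p \<iota> = r \<circ>\<^sub>p (\<iota> \<circ>\<^sub>p \<iota>)" by (rule pcompose_assoc[symmetric])
    show ?thesis unfolding C using A unfolding B .
  qed
  have T3g: "[(r \<circ>\<^sub>p \<iota>) \<circ>\<^sub>p \<iota> = r] (mod g)" for r using T3[of r] gf by (rule cong_dvd_modulus)
  have gp: "\<not> g dvd p"
  proof
    assume "g dvd p"
    moreover have "p dvd p ^ M" using M1 by (intro dvd_power) simp
    ultimately have "g dvd p ^ M" by (rule dvd_trans)
    moreover have "g dvd p ^ M - [:0,1:]" using p by (simp add: cong_dvd_poly)
    ultimately have "g dvd p ^ M - (p ^ M - [:0,1:])" by (rule dvd_diff)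
    then have "g dvd [:0,1:]" by simp
    then show False using not_dvd_x[OF c0 irr] by simp
  qed
  obtain u p' where up: "u * g + p' * p = 1" using bezout_poly[OF irr_coprime[OF irr gp]] by blast
  have pp': "[p * p' = 1] (mod g)"
  proof -
    have "p * p' - 1 = - (u * g)" using up by (simp add: algebra_simps)
    then show ?thesis by (simp add: cong_dvd_poly)
  qed
  obtain a b where ab: "a * g + b * g' = 1" using bezout_poly[OF cgg] by blast
  define e where "e = b * g'"
  have e1: "[e = 1] (mod g)"
  proof -
    have "e - 1 = - (a * g)" using ab e_def by (simp add: algebra_simps)
    then show ?thesis by (simp add: cong_dvd_poly)
  qed
  have e0: "[e = 0] (mod g')" unfolding e_def by (simp add: cong_0_poly)
  define P where "P = e * p + (1 - e) * (p' \<circ>\<^sub>p \<iota>)"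
  have Pg: "[P = p] (mod g)"
  proof -
    have "[P = 1 * p + (1 - 1) * (p' \<circ>\<^sub>p \<iota>)] (mod g)" unfolding P_def
      by (intro cong_add cong_mult cong_diff cong_refl e1)
    then show ?thesis by simp
  qed
  have Pg': "[P = p' \<circ>\<^sub>p \<iota>] (mod g')"
  proof -
    have "[P = 0 * p + (1 - 0) * (p' \<circ>\<^sub>p \<iota>)] (mod g')" unfolding P_def
      by (intro cong_add cong_mult cong_diff cong_refl e0)
    then show ?thesis by simp
  qed
  have xig': "[[:0,1:] * \<iota> = 1] (mod g')" using xi g'f by (rule cong_dvd_modulus)
  have a1: "[P ^ M = [:0,1:]] (mod g)" using cong_pow[OF Pg, of M] p by (rule cong_trans)
  have a2: "[P ^ M = [:0,1:]] (mod g')"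
  proof -
    have "[[:0,1:] * p' ^ M = p ^ M * p' ^ M] (mod g)" using p by (intro cong_mult cong_refl) (rule cong_sym)
    also have "p ^ M * p' ^ M = (p * p') ^ M" by (simp add: power_mult_distrib)
    also have "[(p * p') ^ M = 1 ^ M] (mod g)" by (rule cong_pow[OF pp'])
    finally have "[[:0,1:] * p' ^ M = 1] (mod g)" by simp
    then have "[([:0,1:] * p' ^ M) \<circ>\<^sub>p \<iota> = 1 \<circ>\<^sub>p \<iota>] (mod g')" by (rule T1c)
    then have c: "[\<iota> * ((p' \<circ>\<^sub>p \<iota>) ^ M) = 1] (mod g')"
      by (simp add: pcompose_mult pcompose_power_left')
    have "[P ^ M = (p' \<circ>\<^sub>p \<iota>) ^ M] (mod g')" by (rule cong_pow[OF Pg'])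
    also have "[(p' \<circ>\<^sub>p \<iota>) ^ M = ([:0,1:] * \<iota>) * (p' \<circ>\<^sub>p \<iota>) ^ M] (mod g')"
      using cong_mult[OF cong_sym[OF xig'] cong_refl[of "(p' \<circ>\<^sub>p \<iota>) ^ M"]] by simp
    also have "([:0,1:] * \<iota>) * (p' \<circ>\<^sub>p \<iota>) ^ M = [:0,1:] * (\<iota> * (p' \<circ>\<^sub>p \<iota>) ^ M)"
      by (simp add: algebra_simps)
    also have "[\<dots> = [:0,1:] * 1] (mod g')" by (intro cong_mult cong_refl c)
    finally show ?thesis by simp
  qed
  have a3: "[(P \<circ>\<^sub>p \<iota>) * P = 1] (mod g)"
  proof -
    have "[P \<circ>\<^sub>p \<iota> = (p' \<circ>\<^sub>p \<iota>) \<circ>\<^sub>p \<iota>] (mod g)" by (rule T2c[OF Pg'])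
    also have "[(p' \<circ>\<^sub>p \<iota>) \<circ>\<^sub>p \<iota> = p'] (mod g)" by (rule T3g)
    finally have "[(P \<circ>\<^sub>p \<iota>) * P = p' * p] (mod g)" by (intro cong_mult Pg)
    also have "p' * p = p * p'" by simp
    also have "[\<dots> = 1] (mod g)" by (rule pp')
    finally show ?thesis .
  qed
  have a4: "[(P \<circ>\<^sub>p \<iota>) * P = 1] (mod g')"
  proof -
    have "[(P \<circ>\<^sub>p \<iota>) * P = (p \<circ>\<^sub>p \<iota>) * (p' \<circ>\<^sub>p \<iota>)] (mod g')"
      by (intro cong_mult T1c Pg Pg')
    also have "(p \<circ>\<^sub>p \<iota>) * (p' \<circ>\<^sub>p \<iota>) = (p * p') \<circ>\<^sub>p \<iota>" by (simp add: pcompose_mult)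
    also have "[\<dots> = 1 \<circ>\<^sub>p \<iota>] (mod g')" by (rule T1c[OF pp'])
    finally show ?thesis by simp
  qed
  have "[P ^ M = [:0,1:]] (mod f)" unfolding f_def by (rule cong_both[OF cgg a1 a2])
  moreover have "[(P \<circ>\<^sub>p \<iota>) * P = 1] (mod f)" unfolding f_def by (rule cong_both[OF cgg a3 a4])
  ultimately show ?thesis using xi unfolding f_def g'_def by blast
qed

fun hor :: "nat \<Rightarrow> 'a::field mat \<Rightarrow> 'a list \<Rightarrow> 'a mat" where
  "hor n A [] = 0\<^sub>m n n"
| "hor n A (a # as) = a \<cdot>\<^sub>m 1\<^sub>m n + A * hor n A as"

definition mpe :: "'a::field poly \<Rightarrow> 'a mat \<Rightarrow> 'a mat" where
  "mpe p A = hor (dim_row A) A (coeffs p)"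

lemma hor_carrier: "A \<in> carrier_mat n n \<Longrightarrow> hor n A as \<in> carrier_mat n n"
  by (induction as) auto

lemma mpe_carrier[simp]: "A \<in> carrier_mat n n \<Longrightarrow> mpe p A \<in> carrier_mat n n"
  unfolding mpe_def using hor_carrier by auto

lemma mpe_0[simp]: "A \<in> carrier_mat n n \<Longrightarrow> mpe 0 A = 0\<^sub>m n n"
  unfolding mpe_def by auto

lemma smult_zero_left_mat[simp]: "(0::'a::field) \<cdot>\<^sub>m A = 0\<^sub>m (dim_row A) (dim_col A)"
  by (intro eq_matI) auto

lemma mpe_pCons:
  assumes A: "A \<in> carrier_mat n n"
  shows "mpe (pCons a p) A = a \<cdot>\<^sub>m 1\<^sub>m n + A * mpe p A"
proof (cases "p = 0 \<and> a = 0")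
  case True
  have "0 \<cdot>\<^sub>m 1\<^sub>m n + A * 0\<^sub>m n n = (0\<^sub>m n n :: 'a mat)"
    using A by (simp add: smult_zero_left_mat right_mult_zero_mat)
  then show ?thesis using True A by simp
next
  case False
  then have "coeffs (pCons a p) = a # coeffs p" by (auto simp: cCons_def)
  then show ?thesis unfolding mpe_def using A by simp
qed

lemma mpe_const: "A \<in> carrier_mat n n \<Longrightarrow> mpe [:c:] A = c \<cdot>\<^sub>m 1\<^sub>m n"
  by (simp add: mpe_pCons right_mult_zero_mat)

lemma mpe_one[simp]: assumes A: "A \<in> carrier_mat n n" shows "mpe 1 A = 1\<^sub>m n"
proof -
  have "mpe 1 A = mpe [:1:] A" by (simp only: one_pCons)
  also have "\<dots> = 1 \<cdot>\<^sub>m 1\<^sub>m n" by (rule mpe_const[OF A])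
  also have "\<dots> = 1\<^sub>m n" by (intro eq_matI) auto
  finally show ?thesis .
qed

lemma mpe_x[simp]: assumes A: "A \<in> carrier_mat n n" shows "mpe [:0,1:] A = A"
proof -
  have "mpe [:0,1:] A = 0 \<cdot>\<^sub>m 1\<^sub>m n + A * mpe [:1:] A" by (rule mpe_pCons[OF A])
  also have "mpe [:1:] A = 1\<^sub>m n" using mpe_one[OF A] unfolding one_pCons .
  finally show ?thesis using A by (simp add: right_mult_one_mat)
qed

lemma add4_mat:
  fixes P :: "'a::field mat"
  assumes "P \<in> carrier_mat n m" "Q \<in> carrier_mat n m" "R \<in> carrier_mat n m" "S \<in> carrier_mat n m"
  shows "(P + Q) + (R + S) = (P + R) + (Q + S)"
  using assms by (intro eq_matI) (auto simp: algebra_simps)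

lemma smult_smult_mat: "(c * a) \<cdot>\<^sub>m M = c \<cdot>\<^sub>m (a \<cdot>\<^sub>m (M :: 'a::field mat))"
  by (intro eq_matI) auto

lemma mpe_add:
  assumes A: "A \<in> carrier_mat n n"
  shows "mpe (p + q) A = mpe p A + mpe q A"
proof (induction p arbitrary: q rule: pCons_induct)
  case 0 then show ?case using A by simp
next
  case (pCons a p)
  obtain b q' where q: "q = pCons b q'" by (rule pCons_cases)
  have c: "mpe p A \<in> carrier_mat n n" "mpe q' A \<in> carrier_mat n n" using A by auto
  have "mpe (pCons a p + q) A = (a + b) \<cdot>\<^sub>m 1\<^sub>m n + A * (mpe p A + mpe q' A)"
    unfolding q using A by (simp add: mpe_pCons pCons.IH)
  also have "\<dots> = (a \<cdot>\<^sub>m 1\<^sub>m n + b \<cdot>\<^sub>m 1\<^sub>m n) + (A * mpe p A + A * mpe q' A)"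
    using A c by (simp add: add_smult_distrib_right_mat[OF one_carrier_mat] mult_add_distrib_mat[OF A c(1) c(2)])
  also have "\<dots> = (a \<cdot>\<^sub>m 1\<^sub>m n + A * mpe p A) + (b \<cdot>\<^sub>m 1\<^sub>m n + A * mpe q' A)"
    using A c by (intro add4_mat) auto
  finally show ?case unfolding q using A by (simp add: mpe_pCons)
qed

lemma mpe_smult:
  assumes A: "A \<in> carrier_mat n n"
  shows "mpe (Polynomial.smult c p) A = c \<cdot>\<^sub>m mpe p A"
proof (induction p rule: pCons_induct)
  case 0 then show ?case using A by simp
next
  case (pCons a p)
  have c: "mpe p A \<in> carrier_mat n n" using A by auto
  have "mpe (Polynomial.smult c (pCons a p)) A = (c * a) \<cdot>\<^sub>m 1\<^sub>m n + A * (c \<cdot>\<^sub>m mpe p A)"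
    using A by (simp add: mpe_pCons pCons.IH)
  also have "\<dots> = c \<cdot>\<^sub>m (a \<cdot>\<^sub>m 1\<^sub>m n) + c \<cdot>\<^sub>m (A * mpe p A)"
    using A c by (simp add: mult_smult_distrib[OF A c(1)] smult_smult_mat)
  also have "\<dots> = c \<cdot>\<^sub>m (a \<cdot>\<^sub>m 1\<^sub>m n + A * mpe p A)"
    using A c by (simp add: add_smult_distrib_left_mat[OF smult_carrier_mat[OF one_carrier_mat] mult_carrier_mat[OF A c]])
  finally show ?case using A by (simp add: mpe_pCons)
qed

lemma mpe_mult:
  assumes A: "A \<in> carrier_mat n n"
  shows "mpe (p * q) A = mpe p A * mpe q A"
proof (induction p rule: pCons_induct)
  case 0 then show ?case using A by (simp add: left_mult_zero_mat[OF mpe_carrier[OF A]])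
next
  case (pCons a p)
  have c: "mpe p A \<in> carrier_mat n n" "mpe q A \<in> carrier_mat n n" using A by auto
  have "mpe (pCons a p * q) A = mpe (Polynomial.smult a q + pCons 0 (p * q)) A"
    by simp
  also have "\<dots> = a \<cdot>\<^sub>m mpe q A + A * (mpe p A * mpe q A)"
    using A c by (simp add: mpe_add mpe_smult mpe_pCons pCons.IH left_add_zero_mat[OF mult_carrier_mat[OF A mult_carrier_mat[OF c(1) c(2)]]])
  also have "\<dots> = (a \<cdot>\<^sub>m 1\<^sub>m n + A * mpe p A) * mpe q A"
    using A c by (simp add: add_mult_distrib_mat[OF smult_carrier_mat[OF one_carrier_mat] mult_carrier_mat[OF A c(1)] c(2)] mult_smult_assoc_mat[OF one_carrier_mat c(2)] left_mult_one_mat[OF c(2)] assoc_mult_mat[OF A c(1) c(2)])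
  finally show ?case using A by (simp add: mpe_pCons)
qed

lemma mpe_pow:
  assumes A: "A \<in> carrier_mat n n"
  shows "mpe (p ^ k) A = mpe p A ^\<^sub>m k"
proof (induction k)
  case 0 then show ?case using A by (simp add: carrier_matD(1)[OF mpe_carrier[OF A]])
next
  case (Suc k)
  have "mpe (p ^ Suc k) A = mpe (p ^ k * p) A" by (simp add: mult.commute)
  also have "\<dots> = mpe p A ^\<^sub>m k * mpe p A" using A by (simp add: mpe_mult Suc.IH)
  finally show ?case by simp
qed

lemma mpe_comm:
  assumes A: "A \<in> carrier_mat n n" and B: "B \<in> carrier_mat n n" and AB: "A * B = B * A"
  shows "mpe p A * B = B * mpe p A"
proof (induction p rule: pCons_induct)
  case 0 then show ?case using A B by (simp add: left_mult_zero_mat[OF B] right_mult_zero_mat[OF B])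
next
  case (pCons a p)
  have c: "mpe p A \<in> carrier_mat n n" using A by auto
  have "(a \<cdot>\<^sub>m 1\<^sub>m n + A * mpe p A) * B = a \<cdot>\<^sub>m B + A * (mpe p A * B)"
    using A B c by (simp add: add_mult_distrib_mat[OF smult_carrier_mat[OF one_carrier_mat] mult_carrier_mat[OF A c] B] mult_smult_assoc_mat[OF one_carrier_mat B] left_mult_one_mat[OF B] assoc_mult_mat[OF A c B])
  also have "\<dots> = a \<cdot>\<^sub>m B + (A * B) * mpe p A" using A B c by (simp add: pCons.IH assoc_mult_mat[OF A B c])
  also have "\<dots> = a \<cdot>\<^sub>m B + B * (A * mpe p A)" using A B c by (simp add: AB assoc_mult_mat[OF B A c])
  also have "\<dots> = B * (a \<cdot>\<^sub>m 1\<^sub>m n + A * mpe p A)"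
    using A B c by (simp add: mult_add_distrib_mat[OF B smult_carrier_mat[OF one_carrier_mat] mult_carrier_mat[OF A c]] mult_smult_distrib[OF B one_carrier_mat] right_mult_one_mat[OF B] assoc_mult_mat[OF B A c])
  finally show ?case using A by (simp add: mpe_pCons)
qed

lemma mpe_pcompose:
  assumes A: "A \<in> carrier_mat n n"
  shows "mpe (p \<circ>\<^sub>p q) A = mpe p (mpe q A)"
proof (induction p rule: pCons_induct)
  case 0 then show ?case using A by (simp add: mpe_0[OF mpe_carrier[OF A]])
next
  case (pCons a p)
  have c: "mpe q A \<in> carrier_mat n n" using A by auto
  have "mpe (pCons a p \<circ>\<^sub>p q) A = a \<cdot>\<^sub>m 1\<^sub>m n + mpe q A * mpe p (mpe q A)"
    using A by (simp add: pcompose_pCons mpe_add mpe_const mpe_mult pCons.IH)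
  then show ?case using c by (simp add: mpe_pCons)
qed

lemma transpose_smult_one: "transpose_mat (a \<cdot>\<^sub>m 1\<^sub>m n) = (a::'a::field) \<cdot>\<^sub>m 1\<^sub>m n"
  by (intro eq_matI) auto

lemma mpe_transpose:
  assumes A: "A \<in> carrier_mat n n"
  shows "transpose_mat (mpe p A) = mpe p (transpose_mat A)"
proof (induction p rule: pCons_induct)
  case 0 then show ?case using A by (simp add: mpe_0[of "transpose_mat A" n])
next
  case (pCons a p)
  have At: "transpose_mat A \<in> carrier_mat n n" using A by simp
  have c: "mpe p A \<in> carrier_mat n n" "mpe p (transpose_mat A) \<in> carrier_mat n n" using A At by auto
  have "transpose_mat (a \<cdot>\<^sub>m 1\<^sub>m n + A * mpe p A) = a \<cdot>\<^sub>m 1\<^sub>m n + transpose_mat (mpe p A) * transpose_mat A"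
    using A c by (simp add: transpose_add[OF smult_carrier_mat[OF one_carrier_mat] mult_carrier_mat[OF A c(1)]] transpose_mult[OF A c(1)] transpose_smult_one)
  also have "\<dots> = a \<cdot>\<^sub>m 1\<^sub>m n + transpose_mat A * mpe p (transpose_mat A)"
    using mpe_comm[OF At At refl, of p] by (simp add: pCons.IH)
  finally show ?case using A At by (simp add: mpe_pCons)
qed

lemma mpe_cong:
  assumes A: "A \<in> carrier_mat n n" and f: "mpe f A = 0\<^sub>m n n" and c: "[r = s] (mod f)"
  shows "mpe r A = mpe s A"
proof -
  have "f dvd r - s" using c by (simp add: cong_dvd_poly)
  then obtain u where u: "r - s = f * u" by (elim dvdE)
  have "r = s + f * u" using u by (simp add: algebra_simps)
  then have "mpe r A = mpe s A + mpe f A * mpe u A" using A by (simp add: mpe_add mpe_mult)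
  also have "\<dots> = mpe s A" using A f by (simp add: left_mult_zero_mat[OF mpe_carrier[OF A]] right_add_zero_mat[OF mpe_carrier[OF A]])
  finally show ?thesis .
qed

lemma mult_entry:
  assumes "X \<in> carrier_mat n m" "Y \<in> carrier_mat m k" "i < n" "j < k"
  shows "(X * Y) $$ (i,j) = (\<Sum>l<m. X $$ (i,l) * Y $$ (l,j))"
  using assms by (auto simp: scalar_prod_def atLeast0LessThan intro!: sum.cong)

lemma pow_mat_Suc_left:
  assumes A: "A \<in> carrier_mat n n"
  shows "A * A ^\<^sub>m k = A ^\<^sub>m Suc k"
proof (induction k)
  case 0 then show ?case using A by (simp add: left_mult_one_mat right_mult_one_mat)
next
  case (Suc k)
  have "A * A ^\<^sub>m Suc k = (A * A ^\<^sub>m k) * A"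
    using A by (simp add: assoc_mult_mat[OF A pow_carrier_mat[OF A] A])
  then show ?case using Suc.IH by simp
qed

lemma sum_swap_mult:
  fixes c :: "nat \<Rightarrow> 'a::field" and X :: "nat \<Rightarrow> nat \<Rightarrow> 'a" and a :: "nat \<Rightarrow> 'a"
  shows "(\<Sum>l<n. a l * (\<Sum>k<N. c k * X k l)) = (\<Sum>k<N. c k * (\<Sum>l<n. a l * X k l))"
proof -
  have "(\<Sum>l<n. a l * (\<Sum>k<N. c k * X k l)) = (\<Sum>l<n. \<Sum>k<N. c k * (a l * X k l))"
    by (simp add: sum_distrib_left mult.left_commute)
  also have "\<dots> = (\<Sum>k<N. \<Sum>l<n. c k * (a l * X k l))" by (rule sum.swap)
  also have "\<dots> = (\<Sum>k<N. c k * (\<Sum>l<n. a l * X k l))" by (simp add: sum_distrib_left)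
  finally show ?thesis .
qed

lemma mpe_entry:
  assumes A: "A \<in> carrier_mat n n" and ij: "i < n" "j < n"
  shows "(\<forall>k\<ge>N. coeff p k = 0) \<Longrightarrow> mpe p A $$ (i,j) = (\<Sum>k<N. coeff p k * (A ^\<^sub>m k) $$ (i,j))"
  using ij
proof (induction p arbitrary: N i j rule: pCons_induct)
  case 0 then show ?case using A by simp
next
  case (pCons a p)
  show ?case
  proof (cases N)
    case 0
    then have "\<forall>k. coeff (pCons a p) k = 0" using pCons.prems(1) by simp
    then have "pCons a p = 0" by (intro poly_eqI) simp
    then show ?thesis using pCons.hyps by simp
  next
    case (Suc N')
    have cp: "\<forall>k\<ge>N'. coeff p k = 0"
    proof (intro allI impI)
      fix k assume "k \<ge> N'"
      then have "Suc k \<ge> N" using Suc by simp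
      then have "coeff (pCons a p) (Suc k) = 0" using pCons.prems(1) by blast
      then show "coeff p k = 0" by simp
    qed
    have IH: "mpe p A $$ (l,j) = (\<Sum>k<N'. coeff p k * (A ^\<^sub>m k) $$ (l,j))" if "l < n" for l
      using pCons.IH[OF cp that pCons.prems(3)] .
    have c: "mpe p A \<in> carrier_mat n n" using A by simp
    have dims: "dim_row (A * mpe p A) = n" "dim_col (A * mpe p A) = n" using carrier_matD[OF A] carrier_matD[OF c] by simp_all
    have "mpe (pCons a p) A $$ (i,j) = (a \<cdot>\<^sub>m 1\<^sub>m n + A * mpe p A) $$ (i,j)"
      by (simp only: mpe_pCons[OF A])
    also have "\<dots> = (a \<cdot>\<^sub>m 1\<^sub>m n) $$ (i,j) + (A * mpe p A) $$ (i,j)"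
      using pCons.prems(2,3) by (intro index_add_mat(1)) (simp_all only: dims)
    also have "(A * mpe p A) $$ (i,j) = (\<Sum>l<n. A $$ (i,l) * mpe p A $$ (l,j))"
      by (rule mult_entry[OF A c pCons.prems(2,3)])
    also have "\<dots> = (\<Sum>l<n. A $$ (i,l) * (\<Sum>k<N'. coeff p k * (A ^\<^sub>m k) $$ (l,j)))"
      by (intro sum.cong refl) (simp add: IH)
    also have "\<dots> = (\<Sum>k<N'. coeff p k * (\<Sum>l<n. A $$ (i,l) * (A ^\<^sub>m k) $$ (l,j)))"
      by (rule sum_swap_mult)
    also have "\<dots> = (\<Sum>k<N'. coeff p k * (A ^\<^sub>m Suc k) $$ (i,j))"
    proof (intro sum.cong refl)
      fix k
      have "(A * A ^\<^sub>m k) $$ (i,j) = (\<Sum>l<n. A $$ (i,l) * (A ^\<^sub>m k) $$ (l,j))"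
        by (rule mult_entry[OF A pow_carrier_mat[OF A] pCons.prems(2,3)])
      then show "coeff p k * (\<Sum>l<n. A $$ (i,l) * (A ^\<^sub>m k) $$ (l,j)) = coeff p k * (A ^\<^sub>m Suc k) $$ (i,j)"
        using pow_mat_Suc_left[OF A, of k] by simp
    qed
    finally have lhs: "mpe (pCons a p) A $$ (i,j) = a * (if i = j then 1 else 0) + (\<Sum>k<N'. coeff p k * (A ^\<^sub>m Suc k) $$ (i,j))"
      using pCons.prems by simp
    have "(\<Sum>k<N. coeff (pCons a p) k * (A ^\<^sub>m k) $$ (i,j))
        = coeff (pCons a p) 0 * (A ^\<^sub>m 0) $$ (i,j) + (\<Sum>k<N'. coeff (pCons a p) (Suc k) * (A ^\<^sub>m Suc k) $$ (i,j))"
      unfolding Suc by (rule sum.lessThan_Suc_shift)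
    also have "\<dots> = a * (if i = j then 1 else 0) + (\<Sum>k<N'. coeff p k * (A ^\<^sub>m Suc k) $$ (i,j))"
      using A pCons.prems by simp
    finally show ?thesis using lhs by simp
  qed
qed

lemma coeff_mult_x_right: "coeff (q * [:0,1:]) k = (if k = 0 then 0 else coeff q (k - 1))"
  for q :: "'a::field poly"
proof -
  have "q * [:0,1:] = pCons 0 q" by (simp add: mult.commute)
  then show ?thesis by (cases k) simp_all
qed

lemma coeff_pCons0: "coeff (pCons 0 q) k = (if k = 0 then 0 else coeff q (k - 1))"
  by (cases k) simp_all

lemma coeff_mult_const_right: "coeff (q * [:c:]) k = coeff q k * c" for q :: "'a::field poly"
  by (simp add: mult.commute)

lemma cayley_hamilton:
  fixes A :: "'a::field mat"
  assumes A: "A \<in> carrier_mat n n"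
  shows "mpe (char_poly A) A = 0\<^sub>m n n"
proof -
  define P where "P = char_poly_matrix A"
  define Adj where "Adj = adj_mat P"
  define \<chi> where "\<chi> = char_poly A"
  have P: "P \<in> carrier_mat n n" unfolding P_def using A by simp
  have Adj: "Adj \<in> carrier_mat n n" unfolding Adj_def by (rule adj_mat(1)[OF P])
  have AP: "Adj * P = \<chi> \<cdot>\<^sub>m 1\<^sub>m n" unfolding Adj_def \<chi>_def char_poly_def P_def[symmetric]
    by (rule adj_mat(3)[OF P])
  have Pent: "P $$ (l,j) = (if l = j then [:0,1:] else 0) + [:- (A $$ (l,j)):]" if "l < n" "j < n" for l j
    unfolding P_def char_poly_matrix_def using A that by auto
  have KI: "coeff \<chi> k * (if i = j then 1 else 0) = (if k = 0 then 0 else coeff (Adj $$ (i,j)) (k - 1))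
     - (\<Sum>l<n. coeff (Adj $$ (i,l)) k * A $$ (l,j))" if ij: "i < n" "j < n" for i j k
  proof -
    have e1: "(Adj * P) $$ (i,j) = (\<Sum>l<n. Adj $$ (i,l) * P $$ (l,j))" by (rule mult_entry[OF Adj P ij])
    have e2: "(Adj * P) $$ (i,j) = \<chi> * (if i = j then 1 else 0)" unfolding AP using ij by simp
    have e3: "coeff (Adj $$ (i,l) * P $$ (l,j)) k = (if l = j then (if k = 0 then 0 else coeff (Adj $$ (i,l)) (k - 1)) else 0)
       - coeff (Adj $$ (i,l)) k * A $$ (l,j)" if l: "l < n" for l
      unfolding Pent[OF l ij(2)] by (simp add: distrib_left coeff_mult_x_right coeff_mult_const_right coeff_pCons0)
    have "coeff \<chi> k * (if i = j then 1 else 0) = coeff ((Adj * P) $$ (i,j)) k" using e2 by simp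
    also have "\<dots> = (\<Sum>l<n. coeff (Adj $$ (i,l) * P $$ (l,j)) k)" unfolding e1 by (rule coeff_sum)
    also have "\<dots> = (\<Sum>l<n. (if l = j then (if k = 0 then 0 else coeff (Adj $$ (i,l)) (k - 1)) else 0)
       - coeff (Adj $$ (i,l)) k * A $$ (l,j))" by (intro sum.cong refl) (simp add: e3)
    also have "\<dots> = (if k = 0 then 0 else coeff (Adj $$ (i,j)) (k - 1)) - (\<Sum>l<n. coeff (Adj $$ (i,l)) k * A $$ (l,j))"
      using ij by (simp add: sum_subtractf sum.delta)
    finally show ?thesis .
  qed
  define B where "B k = mat n n (\<lambda>(i,j). coeff (Adj $$ (i,j)) k)" for k
  have B: "B k \<in> carrier_mat n n" for k unfolding B_def by simp
  define D where "D = (\<Sum>i<n. \<Sum>j<n. degree (Adj $$ (i,j)))"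
  define N0 where "N0 = degree \<chi> + D + 1"
  have degAdj: "degree (Adj $$ (i,j)) < N0" if ij: "i < n" "j < n" for i j
  proof -
    have "degree (Adj $$ (i,j)) \<le> (\<Sum>j<n. degree (Adj $$ (i,j)))"
      using ij by (intro member_le_sum) auto
    also have "\<dots> \<le> D" unfolding D_def using ij by (intro member_le_sum) auto
    finally show ?thesis unfolding N0_def by simp
  qed
  have BN0: "B N0 $$ (i,j) = 0" if "i < n" "j < n" for i j
    unfolding B_def using that degAdj[OF that] by (simp add: coeff_eq_0)
  have cchi: "\<forall>k\<ge>Suc N0. coeff \<chi> k = 0" unfolding N0_def by (auto intro: coeff_eq_0)
  show ?thesis
  proof (rule eq_matI)
    show "dim_row (mpe (char_poly A) A) = dim_row (0\<^sub>m n n)" "dim_col (mpe (char_poly A) A) = dim_col (0\<^sub>m n n)"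
      using mpe_carrier[OF A] by auto
    fix i j assume "i < dim_row (0\<^sub>m n n :: 'a mat)" "j < dim_col (0\<^sub>m n n :: 'a mat)"
    then have ij: "i < n" "j < n" by auto
    define T where "T k = (B k * A ^\<^sub>m Suc k) $$ (i,j)" for k
    have trm: "coeff \<chi> k * (A ^\<^sub>m k) $$ (i,j) = (if k = 0 then 0 else T (k - 1)) - T k" for k
    proof -
      have "T k = ((B k * A) * A ^\<^sub>m k) $$ (i,j)"
        unfolding T_def pow_mat_Suc_left[OF A, symmetric] assoc_mult_mat[OF B A pow_carrier_mat[OF A]] ..
      also have "\<dots> = (\<Sum>m<n. (B k * A) $$ (i,m) * (A ^\<^sub>m k) $$ (m,j))"
        by (rule mult_entry[OF mult_carrier_mat[OF B A] pow_carrier_mat[OF A] ij])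
      also have "\<dots> = (\<Sum>m<n. (\<Sum>l<n. coeff (Adj $$ (i,l)) k * A $$ (l,m)) * (A ^\<^sub>m k) $$ (m,j))"
      proof (intro sum.cong refl)
        fix m assume "m \<in> {..<n}"
        then have m: "m < n" by simp
        have "(B k * A) $$ (i,m) = (\<Sum>l<n. B k $$ (i,l) * A $$ (l,m))" by (rule mult_entry[OF B A ij(1) m])
        also have "\<dots> = (\<Sum>l<n. coeff (Adj $$ (i,l)) k * A $$ (l,m))"
          unfolding B_def using ij by (intro sum.cong refl) auto
        finally show "(B k * A) $$ (i,m) * (A ^\<^sub>m k) $$ (m,j) = (\<Sum>l<n. coeff (Adj $$ (i,l)) k * A $$ (l,m)) * (A ^\<^sub>m k) $$ (m,j)"
          by simp
      qed
      finally have Tk: "T k = (\<Sum>m<n. (\<Sum>l<n. coeff (Adj $$ (i,l)) k * A $$ (l,m)) * (A ^\<^sub>m k) $$ (m,j))" .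
      have Tk1: "(if k = 0 then 0 else T (k - 1)) = (\<Sum>m<n. (if k = 0 then 0 else coeff (Adj $$ (i,m)) (k - 1)) * (A ^\<^sub>m k) $$ (m,j))"
      proof (cases k)
        case 0 then show ?thesis by simp
      next
        case (Suc k')
        have "T (k - 1) = (B k' * A ^\<^sub>m k) $$ (i,j)" unfolding T_def Suc by simp
        also have "\<dots> = (\<Sum>m<n. B k' $$ (i,m) * (A ^\<^sub>m k) $$ (m,j))"
          by (rule mult_entry[OF B pow_carrier_mat[OF A] ij])
        also have "\<dots> = (\<Sum>m<n. coeff (Adj $$ (i,m)) k' * (A ^\<^sub>m k) $$ (m,j))"
          unfolding B_def using ij by (intro sum.cong refl) auto
        finally show ?thesis using Suc by simp
      qed
      have "(if k = 0 then 0 else T (k - 1)) - T k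
          = (\<Sum>m<n. ((if k = 0 then 0 else coeff (Adj $$ (i,m)) (k - 1)) - (\<Sum>l<n. coeff (Adj $$ (i,l)) k * A $$ (l,m))) * (A ^\<^sub>m k) $$ (m,j))"
        unfolding Tk Tk1 by (simp add: sum_subtractf left_diff_distrib)
      also have "\<dots> = (\<Sum>m<n. (coeff \<chi> k * (if i = m then 1 else 0)) * (A ^\<^sub>m k) $$ (m,j))"
        by (intro sum.cong refl) (simp add: KI[OF ij(1)])
      also have "\<dots> = (\<Sum>m<n. if i = m then coeff \<chi> k * (A ^\<^sub>m k) $$ (m,j) else 0)"
        by (intro sum.cong refl) simp
      also have "\<dots> = coeff \<chi> k * (A ^\<^sub>m k) $$ (i,j)" using ij by (simp add: sum.delta')
      finally show ?thesis by simp
    qed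
    have "mpe \<chi> A $$ (i,j) = (\<Sum>k<Suc N0. coeff \<chi> k * (A ^\<^sub>m k) $$ (i,j))"
      by (rule mpe_entry[OF A ij cchi])
    also have "\<dots> = (\<Sum>k<Suc N0. (if k = 0 then 0 else T (k - 1))) - (\<Sum>k<Suc N0. T k)"
      unfolding trm by (rule sum_subtractf)
    also have "(\<Sum>k<Suc N0. (if k = 0 then 0 else T (k - 1))) = (\<Sum>k<N0. T k)"
      by (subst sum.lessThan_Suc_shift) simp
    also have "(\<Sum>k<Suc N0. T k) = (\<Sum>k<N0. T k) + T N0" by simp
    also have "T N0 = 0"
    proof -
      have "T N0 = (\<Sum>m<n. B N0 $$ (i,m) * (A ^\<^sub>m Suc N0) $$ (m,j))"
        unfolding T_def by (rule mult_entry[OF B pow_carrier_mat[OF A] ij])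
      also have "\<dots> = 0" using BN0[OF ij(1)] by simp
      finally show ?thesis .
    qed
    finally show "mpe (char_poly A) A $$ (i,j) = 0\<^sub>m n n $$ (i,j)" using ij unfolding \<chi>_def by simp
  qed
qed

lemma mpe_zero_char_dvd:
  fixes A :: "'a::field mat"
  assumes A: "A \<in> carrier_mat n n" and z: "mpe r A = 0\<^sub>m n n"
  shows "char_poly A dvd r ^ n"
proof -
  define P where "P = char_poly_matrix A"
  define L :: "'a mat \<Rightarrow> 'a poly mat" where "L M = map_mat (\<lambda>a. [:a:]) M" for M
  have P: "P \<in> carrier_mat n n" unfolding P_def using A by simp
  have Pent: "P $$ (i,l) = (if i = l then [:0,1:] else 0) + [:- (A $$ (i,l)):]" if "i < n" "l < n" for i l
    unfolding P_def char_poly_matrix_def using A that by auto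
  have Lc: "L M \<in> carrier_mat n n" if "M \<in> carrier_mat n n" for M unfolding L_def using that by auto
  have claim: "\<exists>Q\<in>carrier_mat n n. s \<cdot>\<^sub>m 1\<^sub>m n = P * Q + L (mpe s A)" for s
  proof (induction s rule: pCons_induct)
    case 0
    have z1: "P * 0\<^sub>m n n = 0\<^sub>m n n" by (rule right_mult_zero_mat[OF P])
    have z2: "L (mpe 0 A) = 0\<^sub>m n n" unfolding mpe_0[OF A] L_def by (intro eq_matI) auto
    have z3: "(0::'a poly) \<cdot>\<^sub>m 1\<^sub>m n = 0\<^sub>m n n" by (rule eq_matI) simp_all
    have "(0::'a poly) \<cdot>\<^sub>m 1\<^sub>m n = P * 0\<^sub>m n n + L (mpe 0 A)"
      unfolding z1 z2 z3 by (rule left_add_zero_mat[OF zero_carrier_mat, symmetric])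
    then show ?case by (rule bexI[OF _ zero_carrier_mat])
  next
    case (pCons a s)
    from pCons.IH obtain Q where Q: "Q \<in> carrier_mat n n" and IH: "s \<cdot>\<^sub>m 1\<^sub>m n = P * Q + L (mpe s A)" by (rule bexE)
    define M where "M = mpe s A"
    have M: "M \<in> carrier_mat n n" unfolding M_def using A by simp
    define Q' where "Q' = [:0,1:] \<cdot>\<^sub>m Q + L M"
    have Q': "Q' \<in> carrier_mat n n" unfolding Q'_def using Q Lc[OF M] by simp
    have LM: "L (mpe (pCons a s) A) \<in> carrier_mat n n" by (rule Lc[OF mpe_carrier[OF A]])
    have "pCons a s \<cdot>\<^sub>m 1\<^sub>m n = P * Q' + L (mpe (pCons a s) A)"
    proof (rule eq_matI)
      show "dim_row (pCons a s \<cdot>\<^sub>m 1\<^sub>m n) = dim_row (P * Q' + L (mpe (pCons a s) A))"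
        "dim_col (pCons a s \<cdot>\<^sub>m 1\<^sub>m n) = dim_col (P * Q' + L (mpe (pCons a s) A))"
        using carrier_matD[OF P] carrier_matD[OF Q'] carrier_matD[OF LM] by auto
      fix i j assume "i < dim_row (P * Q' + L (mpe (pCons a s) A))" "j < dim_col (P * Q' + L (mpe (pCons a s) A))"
      then have ij: "i < n" "j < n" using carrier_matD[OF P] carrier_matD[OF Q'] carrier_matD[OF LM] by auto
      have ih: "s * (if i = j then 1 else 0) = (P * Q) $$ (i,j) + [:M $$ (i,j):]"
        using arg_cong[OF IH, of "\<lambda>X. X $$ (i,j)"] ij P Q M Lc[OF M] unfolding M_def[symmetric]
        by (simp add: L_def)
      have PQ: "(P * Q) $$ (i,j) = (\<Sum>l<n. P $$ (i,l) * Q $$ (l,j))" by (rule mult_entry[OF P Q ij])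
      have AM: "(A * M) $$ (i,j) = (\<Sum>l<n. A $$ (i,l) * M $$ (l,j))" by (rule mult_entry[OF A M ij])
      have "(P * Q') $$ (i,j) = (\<Sum>l<n. P $$ (i,l) * Q' $$ (l,j))" by (rule mult_entry[OF P Q' ij])
      also have "\<dots> = (\<Sum>l<n. [:0,1:] * (P $$ (i,l) * Q $$ (l,j)) + P $$ (i,l) * [:M $$ (l,j):])"
        using Q M ij by (intro sum.cong refl) (auto simp: Q'_def L_def algebra_simps)
      also have "\<dots> = [:0,1:] * (P * Q) $$ (i,j) + (\<Sum>l<n. P $$ (i,l) * [:M $$ (l,j):])"
        unfolding PQ by (simp add: sum.distrib sum_distrib_left)
      also have "(\<Sum>l<n. P $$ (i,l) * [:M $$ (l,j):]) = (\<Sum>l<n. (if i = l then [:0,1:] * [:M $$ (l,j):] else 0) - [:A $$ (i,l) * M $$ (l,j):])"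
        using ij by (intro sum.cong refl) (auto simp: Pent algebra_simps)
      also have "\<dots> = [:0,1:] * [:M $$ (i,j):] - [:(A * M) $$ (i,j):]"
        using ij unfolding AM by (simp add: sum_subtractf sum.delta sum_to_poly)
      finally have PQ': "(P * Q') $$ (i,j) = [:0,1:] * (P * Q) $$ (i,j) + ([:0,1:] * [:M $$ (i,j):] - [:(A * M) $$ (i,j):])" .
      have mpe_e: "mpe (pCons a s) A $$ (i,j) = a * (if i = j then 1 else 0) + (A * M) $$ (i,j)"
        unfolding mpe_pCons[OF A] M_def[symmetric] using ij A M by simp
      have "(P * Q' + L (mpe (pCons a s) A)) $$ (i,j) = (P * Q') $$ (i,j) + [:mpe (pCons a s) A $$ (i,j):]"
      proof -
        have "(P * Q' + L (mpe (pCons a s) A)) $$ (i,j) = (P * Q') $$ (i,j) + L (mpe (pCons a s) A) $$ (i,j)"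
          using ij carrier_matD[OF LM] by (intro index_add_mat(1)) simp_all
        moreover have "L (mpe (pCons a s) A) $$ (i,j) = [:mpe (pCons a s) A $$ (i,j):]"
          unfolding L_def using ij carrier_matD[OF mpe_carrier[OF A, of "pCons a s"]] by simp
        ultimately show ?thesis by simp
      qed
      also have "\<dots> = [:0,1:] * ((P * Q) $$ (i,j) + [:M $$ (i,j):]) + [:a * (if i = j then 1 else 0):]"
        unfolding PQ' mpe_e by (simp add: algebra_simps)
      also have "\<dots> = pCons a s * (if i = j then 1 else 0)"
        unfolding ih[symmetric] by (cases "i = j") (simp_all add: algebra_simps)
      also have "\<dots> = (pCons a s \<cdot>\<^sub>m 1\<^sub>m n) $$ (i,j)" using ij by simp
      finally show "(pCons a s \<cdot>\<^sub>m 1\<^sub>m n) $$ (i,j) = (P * Q' + L (mpe (pCons a s) A)) $$ (i,j)" by simp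
    qed
    then show ?case by (rule bexI[OF _ Q'])
  qed
  obtain Q where Q: "Q \<in> carrier_mat n n" and rQ: "r \<cdot>\<^sub>m 1\<^sub>m n = P * Q + L (mpe r A)"
    using claim[of r] by (rule bexE)
  have "L (mpe r A) = 0\<^sub>m n n" unfolding z L_def by (intro eq_matI) auto
  then have "r \<cdot>\<^sub>m 1\<^sub>m n = P * Q" using rQ P Q by simp
  then have "det (r \<cdot>\<^sub>m 1\<^sub>m n) = det P * det Q" using det_mult[OF P Q] by simp
  then have "r ^ n = char_poly A * det Q" unfolding P_def char_poly_def by simp
  then show ?thesis by (rule dvdI)
qed

lemma mvec_zero: "A \<in> carrier_mat n n \<Longrightarrow> A *\<^sub>v 0\<^sub>v n = (0\<^sub>v n :: 'a::field vec)"
  by (intro eq_vecI) auto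

lemma zero_mvec: "v \<in> carrier_vec n \<Longrightarrow> 0\<^sub>m n n *\<^sub>v v = (0\<^sub>v n :: 'a::field vec)"
  by (intro eq_vecI) auto

lemma vec_add_cancel:
  fixes x y :: "'a::field vec"
  assumes "x \<in> carrier_vec n" "y \<in> carrier_vec n" "x + y = y"
  shows "x = 0\<^sub>v n"
proof (rule eq_vecI)
  fix i assume i: "i < dim_vec (0\<^sub>v n :: 'a vec)"
  have "(x + y) $ i = y $ i" using assms(3) by simp
  then show "x $ i = 0\<^sub>v n $ i" using assms(1,2) i by simp
next
  show "dim_vec x = dim_vec (0\<^sub>v n :: 'a vec)" using assms by simp
qed

lemma K_add: "A \<in> carrier_mat n n \<Longrightarrow> v \<in> carrier_vec n \<Longrightarrow>
   mpe (r + s) A *\<^sub>v v = mpe r A *\<^sub>v v + mpe s A *\<^sub>v v"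
  by (simp add: mpe_add add_mult_distrib_mat_vec[OF mpe_carrier mpe_carrier])

lemma K_mult: "A \<in> carrier_mat n n \<Longrightarrow> v \<in> carrier_vec n \<Longrightarrow>
   mpe (r * s) A *\<^sub>v v = mpe r A *\<^sub>v (mpe s A *\<^sub>v v)"
  by (simp add: mpe_mult assoc_mult_mat_vec[OF mpe_carrier mpe_carrier])

lemma K_carrier: "A \<in> carrier_mat n n \<Longrightarrow> v \<in> carrier_vec n \<Longrightarrow> mpe r A *\<^sub>v v \<in> carrier_vec n"
  by (rule mult_mat_vec_carrier[OF mpe_carrier])

lemma K_one: "A \<in> carrier_mat n n \<Longrightarrow> v \<in> carrier_vec n \<Longrightarrow> mpe 1 A *\<^sub>v v = v"
  by simp

lemma K_zero: "A \<in> carrier_mat n n \<Longrightarrow> v \<in> carrier_vec n \<Longrightarrow> mpe 0 A *\<^sub>v v = 0\<^sub>v n"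
  by (simp add: zero_mvec)

lemma ann_dvd:
  fixes A :: "'a::field mat"
  assumes A: "A \<in> carrier_mat n n" and v: "v \<in> carrier_vec n" "v \<noteq> 0\<^sub>v n"
    and G: "irreducible G" and Gv: "mpe G A *\<^sub>v v = 0\<^sub>v n" and rv: "mpe r A *\<^sub>v v = 0\<^sub>v n"
  shows "G dvd r"
proof (rule ccontr)
  assume "\<not> G dvd r"
  then have "coprime G r" by (rule irr_coprime[OF G])
  then obtain u t where ut: "u * G + t * r = 1" using bezout_poly by blast
  have "v = mpe 1 A *\<^sub>v v" using A v by simp
  also have "\<dots> = mpe (u * G) A *\<^sub>v v + mpe (t * r) A *\<^sub>v v" unfolding ut[symmetric] by (rule K_add[OF A v(1)])
  also have "\<dots> = mpe u A *\<^sub>v (mpe G A *\<^sub>v v) + mpe t A *\<^sub>v (mpe r A *\<^sub>v v)"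
    using K_mult[OF A v(1)] by simp
  also have "\<dots> = 0\<^sub>v n" unfolding Gv rv using mvec_zero[OF mpe_carrier[OF A]] by simp
  finally show False using v(2) by simp
qed

lemma ann_dvd_eq:
  fixes A :: "'a::field mat"
  assumes A: "A \<in> carrier_mat n n" and v: "v \<in> carrier_vec n" "v \<noteq> 0\<^sub>v n"
    and G: "irreducible G" and Gv: "mpe G A *\<^sub>v v = 0\<^sub>v n" and e: "mpe r A *\<^sub>v v = mpe r' A *\<^sub>v v"
  shows "G dvd r - r'"
proof (rule ann_dvd[OF A v G Gv])
  have "mpe r A *\<^sub>v v = mpe ((r - r') + r') A *\<^sub>v v" by simp
  also have "\<dots> = mpe (r - r') A *\<^sub>v v + mpe r' A *\<^sub>v v" by (rule K_add[OF A v(1)])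
  finally have "mpe (r - r') A *\<^sub>v v + mpe r' A *\<^sub>v v = mpe r' A *\<^sub>v v" using e by simp
  then show "mpe (r - r') A *\<^sub>v v = 0\<^sub>v n"
    by (rule vec_add_cancel[OF K_carrier[OF A v(1)] K_carrier[OF A v(1)]])
qed

lemma kill_dvd:
  fixes A :: "'a::field mat"
  assumes A: "A \<in> carrier_mat n n" and v: "v \<in> carrier_vec n"
    and Gv: "mpe G A *\<^sub>v v = 0\<^sub>v n" and d: "G dvd r"
  shows "mpe r A *\<^sub>v v = 0\<^sub>v n"
proof -
  obtain u0 where u0: "r = G * u0" using d by (elim dvdE)
  then have u: "r = u0 * G" by (simp add: mult.commute)
  have "mpe r A *\<^sub>v v = mpe u0 A *\<^sub>v (mpe G A *\<^sub>v v)" unfolding u by (rule K_mult[OF A v])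
  also have "\<dots> = 0\<^sub>v n" unfolding Gv by (rule mvec_zero[OF mpe_carrier[OF A]])
  finally show ?thesis .
qed

lemma nonzero_mat_vec:
  fixes X :: "'a::field mat"
  assumes X: "X \<in> carrier_mat n n" and nz: "X \<noteq> 0\<^sub>m n n"
  shows "\<exists>w\<in>carrier_vec n. X *\<^sub>v w \<noteq> 0\<^sub>v n"
proof (rule ccontr)
  assume "\<not> ?thesis"
  then have all: "X *\<^sub>v w = 0\<^sub>v n" if "w \<in> carrier_vec n" for w using that by blast
  have "X = 0\<^sub>m n n"
  proof (rule eq_matI)
    fix i j assume ij: "i < dim_row (0\<^sub>m n n :: 'a mat)" "j < dim_col (0\<^sub>m n n :: 'a mat)"
    then have ij': "i < n" "j < n" by auto
    have "(X *\<^sub>v unit_vec n j) $ i = 0" using all[of "unit_vec n j"] ij' by simp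
    moreover have "(X *\<^sub>v unit_vec n j) $ i = X $$ (i,j)" using X ij' by simp
    ultimately show "X $$ (i,j) = 0\<^sub>m n n $$ (i,j)" using ij' by simp
  qed (use X in auto)
  then show False using nz by simp
qed

lemma g_recip_coprime:
  fixes g :: "'a::field poly"
  assumes mon: "monic g" and irr: "irreducible g" and c0: "coeff g 0 \<noteq> 0" and ne: "g \<noteq> recip_poly g"
  shows "coprime g (recip_poly g)"
proof -
  define g' where "g' = recip_poly g"
  note rf = recip_facts[OF mon irr c0, folded g'_def]
  have ndvd: "\<not> g dvd g'"
  proof
    assume "g dvd g'"
    then have "is_unit g \<or> g' dvd g" using rf(7) unfolding irreducible_altdef by blast
    then have "g' dvd g" using irr by (auto simp: irreducible_def)
    then obtain k where k: "g = g' * k" by (elim dvdE)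
    have "g \<noteq> 0" "g' \<noteq> 0" using irr rf(7) by (auto simp: irreducible_def)
    then have "k \<noteq> 0" "degree k = 0" using k rf(2) by (auto simp: degree_mult_eq)
    then obtain c where kc: "k = [:c:]" by (elim degree_eq_zeroE)
    then have "lead_coeff g = lead_coeff g' * c" using k by simp
    then have "c = 1" using mon rf(1) by simp
    then have "g = g'" using k kc by simp
    then show False using ne g'_def by simp
  qed
  show ?thesis unfolding g'_def[symmetric] by (rule irr_coprime[OF irr ndvd])
qed

theorem corollary4p19:
  fixes g :: "'a::{field,finite} poly" and Omega C :: "'a mat" and M n :: nat
  assumes "M \<ge> 2"
    and "monic g" and "irreducible g" and "degree g = n"
    and "coeff g 0 \<noteq> 0" and "g \<noteq> recip_poly g"
    and "nondeg_alternating (2 * n) Omega"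
    and "C \<in> sp_group (2 * n) Omega"
    and "char_poly C = g * recip_poly g"
  shows "(\<exists>\<alpha> \<in> sp_group (2 * n) Omega. \<alpha> ^\<^sub>m M = C) \<longleftrightarrow> M_power_poly M g"
proof -
  define d where "d = 2 * n"
  define g' where "g' = recip_poly g"
  define f where "f = g * g'"
  have M1: "M \<ge> 1" using assms(1) by simp
  note rf = recip_facts[OF assms(2,3,5), folded g'_def]
  have Om: "Omega \<in> carrier_mat d d" using assms(7) unfolding nondeg_alternating_def d_def by simp
  have C: "C \<in> carrier_mat d d" and CsP: "transpose_mat C * Omega * C = Omega"
    using assms(8) unfolding sp_group_def d_def by auto
  have chi: "char_poly C = f" using assms(9) unfolding f_def g'_def .
  have CH: "mpe f C = 0\<^sub>m d d" using cayley_hamilton[OF C] chi by simp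
  have cgg: "coprime g g'" unfolding g'_def by (rule g_recip_coprime[OF assms(2,3,5,6)])
  have n1: "n \<ge> 1" using irr_degree_pos[OF assms(3)] assms(4) by simp
  have gnu: "\<not> g dvd 1" using assms(3) by (auto simp: irreducible_def)
  have g'nu: "\<not> g' dvd 1" using rf(7) by (auto simp: irreducible_def)
  have pg: "prime_elem g" by (rule field_poly_irreducible_imp_prime[OF assms(3)])
  have pg': "prime_elem g'" by (rule field_poly_irreducible_imp_prime[OF rf(7)])
  have cop: "\<And>r. r dvd g \<Longrightarrow> r dvd g' \<Longrightarrow> r dvd 1"
    by (rule cgg[unfolded comm_monoid_mult_class.coprime_def', rule_format])
  show ?thesis
  proof
    assume "\<exists>\<alpha>\<in>sp_group (2 * n) Omega. \<alpha> ^\<^sub>m M = C"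
    then obtain \<alpha> where al: "\<alpha> \<in> carrier_mat d d" and aM: "\<alpha> ^\<^sub>m M = C"
      unfolding sp_group_def d_def by auto
    have KL: "g dvd r \<and> g' dvd r" if z: "mpe r C = 0\<^sub>m d d" for r
    proof -
      have "f dvd r ^ d" using mpe_zero_char_dvd[OF C z] chi by simp
      then have "g dvd r ^ d" "g' dvd r ^ d" unfolding f_def
        by (auto intro: dvd_mult_left dvd_mult_right)
      then show ?thesis using prime_elem_dvd_power[OF pg] prime_elem_dvd_power[OF pg'] by blast
    qed
    have Gg': "mpe g' C \<noteq> 0\<^sub>m d d"
    proof
      assume "mpe g' C = 0\<^sub>m d d"
      from KL[OF this] have "g dvd g'" by (rule conjunct1)
      then have "g dvd 1" by (rule cop[OF dvd_refl])
      then show False using gnu by simp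
    qed
    have Gg: "mpe g C \<noteq> 0\<^sub>m d d"
    proof
      assume "mpe g C = 0\<^sub>m d d"
      from KL[OF this] have "g' dvd g" by (rule conjunct2)
      then have "g' dvd 1" by (rule cop[OF _ dvd_refl])
      then show False using g'nu by simp
    qed
    have fmpe: "mpe g C * mpe g' C = 0\<^sub>m d d" "mpe g' C * mpe g C = 0\<^sub>m d d"
      using CH unfolding f_def by (simp_all add: mpe_mult[OF C, symmetric] mult.commute)
    obtain w1 where w1: "w1 \<in> carrier_vec d" "mpe g' C *\<^sub>v w1 \<noteq> 0\<^sub>v d"
      using nonzero_mat_vec[OF mpe_carrier[OF C] Gg'] by (rule bexE)
    obtain w2 where w2: "w2 \<in> carrier_vec d" "mpe g C *\<^sub>v w2 \<noteq> 0\<^sub>v d"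
      using nonzero_mat_vec[OF mpe_carrier[OF C] Gg] by (rule bexE)
    define v1 where "v1 = mpe g' C *\<^sub>v w1"
    define v2 where "v2 = mpe g C *\<^sub>v w2"
    have v1: "v1 \<in> carrier_vec d" "v1 \<noteq> 0\<^sub>v d" unfolding v1_def using w1 K_carrier[OF C] by auto
    have v2: "v2 \<in> carrier_vec d" "v2 \<noteq> 0\<^sub>v d" unfolding v2_def using w2 K_carrier[OF C] by auto
    have gv1: "mpe g C *\<^sub>v v1 = 0\<^sub>v d"
      unfolding v1_def assoc_mult_mat_vec[OF mpe_carrier[OF C] mpe_carrier[OF C] w1(1), symmetric] fmpe
      by (rule zero_mvec[OF w1(1)])
    have gv2: "mpe g' C *\<^sub>v v2 = 0\<^sub>v d"
      unfolding v2_def assoc_mult_mat_vec[OF mpe_carrier[OF C] mpe_carrier[OF C] w2(1), symmetric] fmpe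
      by (rule zero_mvec[OF w2(1)])
    have H1: "mpe g C *\<^sub>v (mpe s C *\<^sub>v v1 + mpe t C *\<^sub>v v2) = mpe (g * t) C *\<^sub>v v2" for s t
    proof -
      have "mpe g C *\<^sub>v (mpe s C *\<^sub>v v1 + mpe t C *\<^sub>v v2)
          = mpe g C *\<^sub>v (mpe s C *\<^sub>v v1) + mpe g C *\<^sub>v (mpe t C *\<^sub>v v2)"
        by (rule mult_add_distrib_mat_vec[OF mpe_carrier[OF C] K_carrier[OF C v1(1)] K_carrier[OF C v2(1)]])
      also have "\<dots> = mpe (g * s) C *\<^sub>v v1 + mpe (g * t) C *\<^sub>v v2"
        using K_mult[OF C v1(1)] K_mult[OF C v2(1)] by simp
      also have "mpe (g * s) C *\<^sub>v v1 = 0\<^sub>v d" by (rule kill_dvd[OF C v1(1) gv1]) simp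
      finally show ?thesis using K_carrier[OF C v2(1)] by simp
    qed
    have H2: "mpe g' C *\<^sub>v (mpe s C *\<^sub>v v1 + mpe t C *\<^sub>v v2) = mpe (g' * s) C *\<^sub>v v1" for s t
    proof -
      have "mpe g' C *\<^sub>v (mpe s C *\<^sub>v v1 + mpe t C *\<^sub>v v2)
          = mpe g' C *\<^sub>v (mpe s C *\<^sub>v v1) + mpe g' C *\<^sub>v (mpe t C *\<^sub>v v2)"
        by (rule mult_add_distrib_mat_vec[OF mpe_carrier[OF C] K_carrier[OF C v1(1)] K_carrier[OF C v2(1)]])
      also have "\<dots> = mpe (g' * s) C *\<^sub>v v1 + mpe (g' * t) C *\<^sub>v v2"
        using K_mult[OF C v1(1)] K_mult[OF C v2(1)] by simp
      also have "mpe (g' * t) C *\<^sub>v v2 = 0\<^sub>v d" by (rule kill_dvd[OF C v2(1) gv2]) simp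
      finally show ?thesis using K_carrier[OF C v1(1)] by simp
    qed
    have ng'g: "\<not> g' dvd g"
    proof
      assume "g' dvd g"
      then have "g' dvd 1" by (rule cop[OF _ dvd_refl])
      then show False using g'nu by simp
    qed
    have ngg': "\<not> g dvd g'"
    proof
      assume "g dvd g'"
      then have "g dvd 1" by (rule cop[OF dvd_refl])
      then show False using gnu by simp
    qed
    have degg': "degree g' = n" using rf(2) assms(4) by simp
    have t_zero: "t = t'" if "g' dvd g * (t - t')" "degree t < n" "degree t' < n" for t t'
    proof -
      have "g' dvd t - t'" using that(1) pg' ng'g by (simp add: prime_elem_dvd_mult_iff)
      moreover have "degree (t - t') < degree g'" using that(2,3) degg' degree_diff_le_max[of t t'] by simp
      ultimately have "t - t' = 0" by (rule dvd_small_degree_zero)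
      then show ?thesis by simp
    qed
    have s_zero: "s = s'" if "g dvd g' * (s - s')" "degree s < n" "degree s' < n" for s s'
    proof -
      have "g dvd s - s'" using that(1) pg ngg' by (simp add: prime_elem_dvd_mult_iff)
      moreover have "degree (s - s') < degree g" using that(2,3) assms(4) degree_diff_le_max[of s s'] by simp
      ultimately have "s - s' = 0" by (rule dvd_small_degree_zero)
      then show ?thesis by simp
    qed
    define Pn where "Pn = {s::'a poly. degree s < n}"
    define \<Phi> where "\<Phi> x = mpe (fst x) C *\<^sub>v v1 + mpe (snd x) C *\<^sub>v v2" for x
    have \<Phi>c: "\<Phi> x \<in> carrier_vec d" for x
      unfolding \<Phi>_def using K_carrier[OF C v1(1)] K_carrier[OF C v2(1)] by simp
    have inj: "inj_on \<Phi> (Pn \<times> Pn)"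
    proof (rule inj_onI)
      fix x y assume x: "x \<in> Pn \<times> Pn" and y: "y \<in> Pn \<times> Pn" and e: "\<Phi> x = \<Phi> y"
      obtain s t where x': "x = (s,t)" by (cases x)
      obtain s' t' where y': "y = (s',t')" by (cases y)
      have e': "mpe s C *\<^sub>v v1 + mpe t C *\<^sub>v v2 = mpe s' C *\<^sub>v v1 + mpe t' C *\<^sub>v v2"
        using e unfolding \<Phi>_def x' y' by simp
      have "mpe (g * t) C *\<^sub>v v2 = mpe (g * t') C *\<^sub>v v2" using H1[of s t] H1[of s' t'] e' by simp
      then have "g' dvd g * t - g * t'" by (rule ann_dvd_eq[OF C v2 rf(7) gv2])
      then have "t = t'" using t_zero[of t t'] x y unfolding x' y' Pn_def by (simp add: right_diff_distrib)
      have "mpe (g' * s) C *\<^sub>v v1 = mpe (g' * s') C *\<^sub>v v1" using H2[of s t] H2[of s' t'] e' by simp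
      then have "g dvd g' * s - g' * s'" by (rule ann_dvd_eq[OF C v1 assms(3) gv1])
      then have "s = s'" using s_zero[of s s'] x y unfolding x' y' Pn_def by (simp add: right_diff_distrib)
      show "x = y" unfolding x' y' using \<open>s = s'\<close> \<open>t = t'\<close> by simp
    qed
    have fin: "finite Pn" unfolding Pn_def by (rule Pset_card(2)[OF n1])
    have cardPn: "card Pn = CARD('a) ^ n" unfolding Pn_def by (rule Pset_card(1)[OF n1])
    have img: "\<Phi> ` (Pn \<times> Pn) = carrier_vec d"
    proof (rule card_seteq[OF finite_carrier_vec])
      show "\<Phi> ` (Pn \<times> Pn) \<subseteq> carrier_vec d" using \<Phi>c by auto
      have "card (carrier_vec d :: 'a vec set) = CARD('a) ^ d" by (rule card_carrier_vec)
      also have "\<dots> = card Pn * card Pn" unfolding cardPn d_def by (simp add: power_add[symmetric] mult_2)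
      also have "\<dots> = card (Pn \<times> Pn)" by (simp add: card_cartesian_product)
      also have "\<dots> = card (\<Phi> ` (Pn \<times> Pn))" by (rule card_image[OF inj, symmetric])
      finally show "card (carrier_vec d :: 'a vec set) \<le> card (\<Phi> ` (Pn \<times> Pn))" by simp
    qed
    have aS: "\<alpha> * \<alpha> ^\<^sub>m M = \<alpha> ^\<^sub>m M * \<alpha>" using pow_mat_Suc_left[OF al, of M] by simp
    have aC: "C * \<alpha> = \<alpha> * C" using aS unfolding aM by simp
    have acomm: "mpe r C * \<alpha> = \<alpha> * mpe r C" for r by (rule mpe_comm[OF C al aC])
    have av1: "\<alpha> *\<^sub>v v1 \<in> carrier_vec d" using al v1(1) by simp
    then have "\<alpha> *\<^sub>v v1 \<in> \<Phi> ` (Pn \<times> Pn)" by (simp only: img)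
    then obtain x where x: "x \<in> Pn \<times> Pn" "\<alpha> *\<^sub>v v1 = \<Phi> x" by (rule imageE)
    obtain s t where x': "x = (s,t)" by (cases x)
    have st: "\<alpha> *\<^sub>v v1 = mpe s C *\<^sub>v v1 + mpe t C *\<^sub>v v2" using x(2) unfolding x' \<Phi>_def by simp
    have "mpe g C *\<^sub>v (\<alpha> *\<^sub>v v1) = (mpe g C * \<alpha>) *\<^sub>v v1"
      by (rule assoc_mult_mat_vec[OF mpe_carrier[OF C] al v1(1), symmetric])
    also have "\<dots> = \<alpha> *\<^sub>v (mpe g C *\<^sub>v v1)"
      unfolding acomm by (rule assoc_mult_mat_vec[OF al mpe_carrier[OF C] v1(1)])
    also have "\<dots> = 0\<^sub>v d" unfolding gv1 by (rule mvec_zero[OF al])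
    finally have "mpe (g * t) C *\<^sub>v v2 = 0\<^sub>v d" using H1[of s t] st by simp
    then have "mpe (g * t) C *\<^sub>v v2 = mpe (g * 0) C *\<^sub>v v2" using K_zero[OF C v2(1)] by simp
    then have "g' dvd g * t - g * 0" by (rule ann_dvd_eq[OF C v2 rf(7) gv2])
    then have "t = 0" using t_zero[of t 0] x(1) n1 unfolding x' Pn_def by simp
    then have as: "\<alpha> *\<^sub>v v1 = mpe s C *\<^sub>v v1" using st K_zero[OF C v2(1)] K_carrier[OF C v1(1)] by simp
    have pw: "(\<alpha> ^\<^sub>m k) *\<^sub>v v1 = mpe (s ^ k) C *\<^sub>v v1" for k
    proof (induction k)
      case 0 then show ?case using al v1(1) C by simp
    next
      case (Suc k)
      have "(\<alpha> ^\<^sub>m Suc k) *\<^sub>v v1 = \<alpha> *\<^sub>v ((\<alpha> ^\<^sub>m k) *\<^sub>v v1)"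
        unfolding pow_mat_Suc_left[OF al, symmetric] by (rule assoc_mult_mat_vec[OF al pow_carrier_mat[OF al] v1(1)])
      also have "\<dots> = (\<alpha> * mpe (s ^ k) C) *\<^sub>v v1"
        unfolding Suc.IH by (rule assoc_mult_mat_vec[OF al mpe_carrier[OF C] v1(1), symmetric])
      also have "\<dots> = mpe (s ^ k) C *\<^sub>v (\<alpha> *\<^sub>v v1)"
        unfolding acomm[symmetric] by (rule assoc_mult_mat_vec[OF mpe_carrier[OF C] al v1(1)])
      also have "\<dots> = mpe (s ^ k * s) C *\<^sub>v v1" unfolding as by (rule K_mult[OF C v1(1), symmetric])
      finally show ?case by (simp add: mult.commute)
    qed
    have xC: "mpe [:0,1:] C = C" by (rule mpe_x[OF C])
    have "mpe (s ^ M) C *\<^sub>v v1 = mpe [:0,1:] C *\<^sub>v v1" unfolding xC using pw[of M] aM by simp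
    then have "g dvd s ^ M - [:0,1:]" by (rule ann_dvd_eq[OF C v1 assms(3) gv1])
    then have "[s ^ M = [:0,1:]] (mod g)" by (simp add: cong_dvd_poly)
    then show "M_power_poly M g" by (rule Mpow_of_root[OF assms(2,3,5) M1])
  next
    assume "M_power_poly M g"
    from root_of_Mpow[OF this] obtain p where p: "[p ^ M = [:0,1:]] (mod g)" by blast
    from construct_poly[OF assms(2,3,5,6) M1 p] obtain \<iota> P where
      xi: "[[:0,1:] * \<iota> = 1] (mod f)" and PM: "[P ^ M = [:0,1:]] (mod f)"
      and Psp: "[(P \<circ>\<^sub>p \<iota>) * P = 1] (mod f)"
      unfolding f_def g'_def by blast
    define \<alpha> where "\<alpha> = mpe P C"
    define I where "I = mpe \<iota> C"
    have al: "\<alpha> \<in> carrier_mat d d" unfolding \<alpha>_def using C by simp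
    have Ic: "I \<in> carrier_mat d d" unfolding I_def using C by simp
    have Ct: "transpose_mat C \<in> carrier_mat d d" using C by simp
    have aM: "\<alpha> ^\<^sub>m M = C"
    proof -
      have "\<alpha> ^\<^sub>m M = mpe (P ^ M) C" unfolding \<alpha>_def by (rule mpe_pow[OF C, symmetric])
      also have "\<dots> = mpe [:0,1:] C" by (rule mpe_cong[OF C CH PM])
      also have "\<dots> = C" by (rule mpe_x[OF C])
      finally show ?thesis .
    qed
    have CI: "C * I = 1\<^sub>m d"
    proof -
      have "mpe ([:0,1:] * \<iota>) C = mpe [:0,1:] C * mpe \<iota> C" by (rule mpe_mult[OF C])
      then have "C * I = mpe ([:0,1:] * \<iota>) C" unfolding I_def mpe_x[OF C] by (rule sym)
      also have "\<dots> = mpe 1 C" by (rule mpe_cong[OF C CH xi])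
      also have "\<dots> = 1\<^sub>m d" using C by simp
      finally show ?thesis .
    qed
    have CtO: "transpose_mat C * Omega = Omega * I"
    proof -
      have "transpose_mat C * Omega = (transpose_mat C * Omega) * (C * I)"
        unfolding CI using Ct Om by (simp add: right_mult_one_mat)
      also have "\<dots> = (transpose_mat C * Omega * C) * I"
        by (rule assoc_mult_mat[OF mult_carrier_mat[OF Ct Om] C Ic, symmetric])
      also have "\<dots> = Omega * I" unfolding CsP ..
      finally show ?thesis .
    qed
    have Sym: "mpe r (transpose_mat C) * Omega = Omega * mpe (r \<circ>\<^sub>p \<iota>) C" for r
    proof (induction r rule: pCons_induct)
      case 0
      show ?case using Ct Om C by (simp add: left_mult_zero_mat[OF Om] right_mult_zero_mat[OF Om])
    next
      case (pCons a r)
      define R where "R = mpe (r \<circ>\<^sub>p \<iota>) C"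
      have R: "R \<in> carrier_mat d d" unfolding R_def using C by simp
      have Rt: "mpe r (transpose_mat C) \<in> carrier_mat d d" using Ct by simp
      have "mpe (pCons a r) (transpose_mat C) * Omega = (a \<cdot>\<^sub>m 1\<^sub>m d + transpose_mat C * mpe r (transpose_mat C)) * Omega"
        by (simp only: mpe_pCons[OF Ct])
      also have "\<dots> = a \<cdot>\<^sub>m Omega + transpose_mat C * (mpe r (transpose_mat C) * Omega)"
        using Ct Om Rt by (simp add: add_mult_distrib_mat[OF smult_carrier_mat[OF one_carrier_mat] mult_carrier_mat[OF Ct Rt] Om]
            mult_smult_assoc_mat[OF one_carrier_mat Om] left_mult_one_mat[OF Om] assoc_mult_mat[OF Ct Rt Om])
      also have "\<dots> = a \<cdot>\<^sub>m Omega + Omega * (I * R)"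
        unfolding pCons.IH R_def[symmetric]
        using Ct Om R Ic CtO by (simp add: assoc_mult_mat[OF Ct Om R, symmetric] assoc_mult_mat[OF Om Ic R])
      also have "\<dots> = Omega * (a \<cdot>\<^sub>m 1\<^sub>m d + I * R)"
        using Om Ic R by (simp add: mult_add_distrib_mat[OF Om smult_carrier_mat[OF one_carrier_mat] mult_carrier_mat[OF Ic R]]
            mult_smult_distrib[OF Om one_carrier_mat] right_mult_one_mat[OF Om])
      also have "a \<cdot>\<^sub>m 1\<^sub>m d + I * R = mpe (pCons a r \<circ>\<^sub>p \<iota>) C"
        unfolding R_def I_def using C by (simp add: pcompose_pCons mpe_add mpe_const mpe_mult)
      finally show ?case .
    qed
    have "transpose_mat \<alpha> * Omega * \<alpha> = Omega"
    proof -
      have "transpose_mat \<alpha> * Omega * \<alpha> = (mpe P (transpose_mat C) * Omega) * \<alpha>"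
        unfolding \<alpha>_def mpe_transpose[OF C] ..
      also have "\<dots> = Omega * (mpe (P \<circ>\<^sub>p \<iota>) C * \<alpha>)"
        unfolding Sym using Om C al by (simp add: assoc_mult_mat[OF Om mpe_carrier[OF C] al])
      also have "mpe (P \<circ>\<^sub>p \<iota>) C * \<alpha> = mpe ((P \<circ>\<^sub>p \<iota>) * P) C" unfolding \<alpha>_def using C by (simp add: mpe_mult)
      also have "\<dots> = mpe 1 C" by (rule mpe_cong[OF C CH Psp])
      also have "\<dots> = 1\<^sub>m d" using C by simp
      finally show ?thesis using Om by (simp add: right_mult_one_mat)
    qed
    then have "\<alpha> \<in> sp_group (2 * n) Omega" unfolding sp_group_def d_def[symmetric] using al by simp
    then show "\<exists>\<alpha>\<in>sp_group (2 * n) Omega. \<alpha> ^\<^sub>m M = C" using aM by (rule bexI[rotated])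
  qed
qed

end
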